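(* A complex tensor $T\in\mathbb{C}^{n\times n\times n}$ of order 3 belongs to $\mathrm{OT}_n(\mathbb{C})$ if and only if each of the three families of slices of $T$ (the $x$-slices, the $y$-slices and the $z$-slices), denoting the family by $M_1,\dots,M_n$, satisfies: (i) for each $k$, $M_k^TM_k$ is diagonalizable and $\operatorname{rank}M_k=\operatorname{rank}M_k^TM_k$; and (ii) the matrices $M_kM_l^T$ and $M_k^TM_l$ are symmetric for all $k,l\in\{1,\dots,n\}$.
   Context: Associate to $T$ the trilinear form $t(x,y,z)=\sum_{i,j,k}T_{ijk}x_iy_jz_k$. $\mathrm{OT}_n(\mathbb{C})$ is the set of tensors whose trilinear form can be written $t(x,y,z)=g(Ax,By,Cz)$ with $A,B,C\in M_n(\mathbb{C})$ complex orthogonal ($A^TA=\mathrm{Id}$ etc.) and $g(x,y,z)=\sum_{i=1}^n\alpha_ix_iy_iz_i$, $\alpha_i\in\mathbb{C}$. Slices: $X_k=(T_{kjl})_{j,l}$ (matrix of $\partial t/\partial x_k$ in $(y,z)$), $Y_k=(T_{ikl})_{i,l}$ (matrix of $\partial t/\partial y_k$ in $(x,z)$), $Z_k=(T_{ijk})_{i,j}$ (matrix of $\partial t/\partial z_k$ in $(x,y)$). *)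

theory Defs
  imports "HOL-Analysis.Analysis"
begin

definition trilin :: "complex^'n^'n^'n \<Rightarrow> complex^'n \<Rightarrow> complex^'n \<Rightarrow> complex^'n \<Rightarrow> complex"
  where "trilin T x y z = (\<Sum>i\<in>UNIV. \<Sum>j\<in>UNIV. \<Sum>k\<in>UNIV. T$i$j$k * x$i * y$j * z$k)"

text \<open>Complex orthogonal matrix: A^T A = Id (no conjugation).\<close>
definition corth :: "complex^'n^'n \<Rightarrow> bool"
  where "corth A \<longleftrightarrow> transpose A ** A = mat 1"

definition OT :: "(complex^'n^'n^'n) set"
  where "OT = {T. \<exists>A B C (\<alpha>::complex^'n). corth A \<and> corth B \<and> corth C \<and>
     (\<forall>x y z. trilin T x y z = (\<Sum>i\<in>UNIV. \<alpha>$i * (A *v x)$i * (B *v y)$i * (C *v z)$i))}"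

definition is_diag_mat :: "complex^'n^'n \<Rightarrow> bool"
  where "is_diag_mat D \<longleftrightarrow> (\<forall>i j. i \<noteq> j \<longrightarrow> D$i$j = 0)"

definition diagonalizable :: "complex^'n^'n \<Rightarrow> bool"
  where "diagonalizable M \<longleftrightarrow> (\<exists>P::complex^'n^'n. invertible P \<and> is_diag_mat (matrix_inv P ** M ** P))"

definition xslice :: "complex^'n^'n^'n \<Rightarrow> 'n \<Rightarrow> complex^'n^'n"
  where "xslice T k = (\<chi> j l. T$k$j$l)"
definition yslice :: "complex^'n^'n^'n \<Rightarrow> 'n \<Rightarrow> complex^'n^'n"
  where "yslice T k = (\<chi> i l. T$i$k$l)"
definition zslice :: "complex^'n^'n^'n \<Rightarrow> 'n \<Rightarrow> complex^'n^'n"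
  where "zslice T k = (\<chi> i j. T$i$j$k)"

definition slice_cond :: "('n \<Rightarrow> complex^'n^'n) \<Rightarrow> bool"
  where "slice_cond M \<longleftrightarrow>
     (\<forall>k. diagonalizable (transpose (M k) ** M k) \<and> rank (M k) = rank (transpose (M k) ** M k)) \<and>
     (\<forall>k l. transpose (M k ** transpose (M l)) = M k ** transpose (M l) \<and>
            transpose (transpose (M k) ** M l) = transpose (M k) ** M l)"

end

theory Submission
  imports Defs
begin


definition bd :: "complex^'n \<Rightarrow> complex^'n \<Rightarrow> complex" where
  "bd x y = (\<Sum>i\<in>UNIV. x$i * y$i)"

lemma bd_comm: "bd x y = bd y x"
  unfolding bd_def by (simp add: mult.commute)

lemma bd_add_left: "bd (x + y) z = bd x z + bd y z"
  unfolding bd_def by (simp add: distrib_right sum.distrib)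
lemma bd_add_right: "bd z (x + y) = bd z x + bd z y"
  unfolding bd_def by (simp add: distrib_left sum.distrib)
lemma bd_diff_left: "bd (x - y) z = bd x z - bd y z"
  unfolding bd_def by (simp add: left_diff_distrib sum_subtractf)
lemma bd_diff_right: "bd z (x - y) = bd z x - bd z y"
  unfolding bd_def by (simp add: right_diff_distrib sum_subtractf)
lemma bd_scale_left: "bd (c *s x) y = c * bd x y"
  unfolding bd_def by (simp add: sum_distrib_left mult.assoc)
lemma bd_scale_right: "bd y (c *s x) = c * bd y x"
  unfolding bd_def by (simp add: sum_distrib_left algebra_simps)
lemma bd_zero_left[simp]: "bd 0 x = 0" and bd_zero_right[simp]: "bd x 0 = 0"
  unfolding bd_def by simp_all
lemma bd_sum_left: "bd (\<Sum>i\<in>S. f i) y = (\<Sum>i\<in>S. bd (f i) y)"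
  unfolding bd_def by (simp add: sum_distrib_right sum_component) (rule sum.swap)
lemma bd_sum_right: "bd y (\<Sum>i\<in>S. f i) = (\<Sum>i\<in>S. bd y (f i))"
  using bd_sum_left[of f S y] by (simp add: bd_comm)
lemma bd_axis: "bd x (axis j 1) = x$j"
  unfolding bd_def axis_def by (simp add: if_distrib cong: if_cong)
lemma bd_nondeg: "(\<And>y. bd x y = 0) \<Longrightarrow> x = 0"
  by (metis bd_axis vec_eq_iff zero_index)
lemma mv_comp: "(A *v x)$i = bd (A$i) x"
  unfolding bd_def matrix_vector_mult_def by simp
lemma bd_mv: "bd (A *v x) y = bd x (transpose A *v y)"
  unfolding bd_def matrix_vector_mult_def transpose_def
  by (simp add: sum_distrib_left sum_distrib_right algebra_simps) (rule sum.swap)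

lemma subspace_bd0: "vec.subspace {u. bd w u = 0}"
  unfolding vec.subspace_def by (simp add: bd_add_right bd_scale_right)

lemma span_bd0: "u \<in> vec.span S \<Longrightarrow> (\<And>s. s \<in> S \<Longrightarrow> bd w s = 0) \<Longrightarrow> bd w u = 0"
  using vec.span_induct[of u S "\<lambda>u. bd w u = 0"] subspace_bd0 by auto

definition ON :: "(complex^'n) set \<Rightarrow> bool" where
  "ON Q \<longleftrightarrow> (\<forall>p\<in>Q. \<forall>q\<in>Q. bd p q = (if p = q then 1 else 0))"

lemma ON_indep: assumes "ON Q" shows "vec.independent Q"
proof
  assume "vec.dependent Q"
  then obtain t u where t: "finite t" "t \<subseteq> Q" "(\<Sum>v\<in>t. u v *s v) = 0" and ex: "\<exists>v\<in>t. u v \<noteq> 0"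
    unfolding vec.dependent_explicit by (elim exE conjE) (rule that)
  from ex obtain v where v: "v \<in> t" "u v \<noteq> 0" by (elim bexE) (rule that)
  have "0 = bd v (\<Sum>w\<in>t. u w *s w)" using t(3) by simp
  also have "\<dots> = (\<Sum>w\<in>t. u w * bd v w)" by (simp add: bd_sum_right bd_scale_right)
  also have "\<dots> = (\<Sum>w\<in>t. if w = v then u w else 0)"
  proof (rule sum.cong)
    fix w assume "w \<in> t"
    then have "bd v w = (if v = w then 1 else 0)" using assms t(2) v(1) unfolding ON_def by blast
    then show "u w * bd v w = (if w = v then u w else 0)" by auto
  qed (rule refl)
  also have "\<dots> = u v" using t(1) v(1) by simp
  finally show False using v(2) by simp
qed

lemma ON_finite: assumes "ON Q" shows "finite Q"
  using vec.independent_bound_general[OF ON_indep[OF assms]] by (rule conjunct1)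

lemma ON_bd: assumes "ON Q" "p \<in> Q" "q \<in> Q" shows "bd p q = (if p = q then 1 else 0)"
proof -
  have "\<forall>q\<in>Q. bd p q = (if p = q then 1 else 0)" using assms(1) assms(2) unfolding ON_def by (rule bspec)
  then show ?thesis using assms(3) by (rule bspec)
qed

lemma ON_proj: assumes "ON Q" "q \<in> Q"
  shows "bd q (x - (\<Sum>p\<in>Q. bd p x *s p)) = 0"
proof -
  have "bd q (\<Sum>p\<in>Q. bd p x *s p) = (\<Sum>p\<in>Q. bd p x * bd q p)"
    by (simp add: bd_sum_right bd_scale_right)
  also have "\<dots> = (\<Sum>p\<in>Q. if p = q then bd p x else 0)"
  proof (rule sum.cong)
    fix p assume "p \<in> Q"
    then have "bd q p = (if p = q then 1 else 0)" using ON_bd[OF assms(1) assms(2)] by auto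
    then show "bd p x * bd q p = (if p = q then bd p x else 0)" by simp
  qed simp
  also have "\<dots> = bd q x" using assms ON_finite[OF assms(1)] by simp
  finally have "bd q (\<Sum>p\<in>Q. bd p x *s p) = bd q x" .
  then show ?thesis unfolding bd_diff_right by simp
qed

lemma csqrt_sq: "csqrt z * csqrt z = z"
  using power2_csqrt[of z] unfolding power2_eq_square .

lemma normalize_unit: assumes "bd p p \<noteq> 0"
  shows "bd ((1 / csqrt (bd p p)) *s p) ((1 / csqrt (bd p p)) *s p) = 1"
proof -
  define s where "s = csqrt (bd p p)"
  have ss: "s * s = bd p p" unfolding s_def by (rule csqrt_sq)
  have "bd ((1 / s) *s p) ((1 / s) *s p) = (1/s) * ((1/s) * bd p p)"
    unfolding bd_scale_left bd_scale_right by (rule refl)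
  also have "\<dots> = bd p p / (s * s)" by simp
  also have "\<dots> = 1" using assms ss by simp
  finally show ?thesis unfolding s_def .
qed

lemma nonisotropic:
  assumes "bd w v \<noteq> 0"
  shows "bd w w \<noteq> 0 \<or> bd v v \<noteq> 0 \<or> bd (w + v) (w + v) \<noteq> 0"
proof (rule ccontr)
  assume "\<not> ?thesis"
  then have "bd w w = 0" "bd v v = 0" "bd (w + v) (w + v) = 0" by auto
  moreover have "bd (w + v) (w + v) = bd w w + bd v v + 2 * bd w v"
    unfolding bd_add_left bd_add_right by (simp add: bd_comm[of v w])
  ultimately show False using assms by simp
qed



definition eigs :: "complex^'n^'n \<Rightarrow> (complex^'n) set" where
  "eigs f = {v. \<exists>\<mu>. f *v v = \<mu> *s v}"

definition dg :: "complex^'n^'n \<Rightarrow> bool" where "dg f \<longleftrightarrow> UNIV \<subseteq> vec.span (eigs f)"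

lemma REP:
  assumes "x \<in> vec.span (eigs f)"
  shows "\<exists>L v. finite L \<and> (\<forall>l\<in>L. f *v v l = l *s v l) \<and> x = (\<Sum>l\<in>L. v l)"
proof (rule vec.span_induct_alt[OF assms])
  show "\<exists>L v. finite L \<and> (\<forall>l\<in>L. f *v v l = l *s v l) \<and> 0 = (\<Sum>l\<in>L. v l)"
    by (rule exI[of _ "{}"]) simp
next
  fix c x y assume x2: "x \<in> eigs f" and y2: "\<exists>L v. finite L \<and> (\<forall>l\<in>L. f *v v l = l *s v l) \<and> y = (\<Sum>l\<in>L. v l)"
  from x2 obtain \<mu> where \<mu>: "f *v x = \<mu> *s x" unfolding eigs_def by auto
  from y2 obtain L v where L: "finite L" "\<forall>l\<in>L. f *v v l = l *s v l" "y = (\<Sum>l\<in>L. v l)"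
    by (elim exE conjE) (rule that)
  define v' where "v' = v(\<mu> := c *s x + (if \<mu> \<in> L then v \<mu> else 0))"
  have fin: "finite (insert \<mu> L)" using L(1) by simp
  have eig: "\<forall>l\<in>insert \<mu> L. f *v v' l = l *s v' l"
  proof
    fix l assume "l \<in> insert \<mu> L"
    show "f *v v' l = l *s v' l"
    proof (cases "l = \<mu>")
      case True
      have "f *v v' l = c *s (f *v x) + (if \<mu> \<in> L then f *v v \<mu> else 0)"
        using True by (simp add: v'_def vec.add vec.scale)
      also have "\<dots> = c *s (\<mu> *s x) + (if \<mu> \<in> L then \<mu> *s v \<mu> else 0)"
        using \<mu> L(2) by simp
      also have "\<dots> = \<mu> *s (c *s x + (if \<mu> \<in> L then v \<mu> else 0))"
        by (simp add: vec.scale_right_distrib vec.scale_scale mult.commute)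
      finally show ?thesis using True by (simp add: v'_def)
    next
      case False
      then have "l \<in> L" using \<open>l \<in> insert \<mu> L\<close> by simp
      then show ?thesis using False L(2) by (simp add: v'_def)
    qed
  qed
  have sum: "c *s x + y = (\<Sum>l\<in>insert \<mu> L. v' l)"
  proof (cases "\<mu> \<in> L")
    case True
    have "(\<Sum>l\<in>insert \<mu> L. v' l) = (\<Sum>l\<in>L. v' l)" using True by (simp add: insert_absorb)
    also have "\<dots> = v' \<mu> + (\<Sum>l\<in>L - {\<mu>}. v' l)" using True L(1) by (simp add: sum.remove)
    also have "(\<Sum>l\<in>L - {\<mu>}. v' l) = (\<Sum>l\<in>L - {\<mu>}. v l)" by (rule sum.cong) (auto simp: v'_def)
    also have "v' \<mu> = c *s x + v \<mu>" using True by (simp add: v'_def)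
    also have "c *s x + v \<mu> + (\<Sum>l\<in>L - {\<mu>}. v l) = c *s x + (\<Sum>l\<in>L. v l)"
      using True L(1) by (simp add: sum.remove add.assoc)
    finally show ?thesis using L(3) by simp
  next
    case False
    have "(\<Sum>l\<in>insert \<mu> L. v' l) = v' \<mu> + (\<Sum>l\<in>L. v' l)" using False L(1) by simp
    also have "(\<Sum>l\<in>L. v' l) = (\<Sum>l\<in>L. v l)" using False by (intro sum.cong) (auto simp: v'_def)
    also have "v' \<mu> = c *s x" using False by (simp add: v'_def)
    finally show ?thesis using L(3) by simp
  qed
  show "\<exists>L v. finite L \<and> (\<forall>l\<in>L. f *v v l = l *s v l) \<and> c *s x + y = (\<Sum>l\<in>L. v l)" by (intro exI[of _ "insert \<mu> L"] exI[of _ v'] conjI fin eig sum)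
qed

lemma VAND:
  assumes W: "vec.subspace W" and inv: "\<forall>w\<in>W. f *v w \<in> W" and fin: "finite L"
  shows "(\<forall>l\<in>L. f *v v l = l *s v l) \<Longrightarrow> (\<Sum>l\<in>L. v l) \<in> W \<Longrightarrow> \<forall>l\<in>L. v l \<in> W"
  using fin
proof (induction L arbitrary: v rule: finite_induct)
  case empty then show ?case by simp
next
  case (insert a L)
  let ?s = "\<Sum>l\<in>insert a L. v l"
  have s: "?s = v a + (\<Sum>l\<in>L. v l)" using insert.hyps by simp
  have "f *v ?s = (\<Sum>l\<in>insert a L. l *s v l)"
    unfolding vec.sum using insert.prems(1) by (intro sum.cong) auto
  then have "f *v ?s - a *s ?s = (\<Sum>l\<in>insert a L. l *s v l - a *s v l)"
    by (simp add: vec.scale_sum_right sum_subtractf)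
  also have "\<dots> = (\<Sum>l\<in>insert a L. (l - a) *s v l)"
    by (simp add: vec.scale_left_diff_distrib)
  also have "\<dots> = (\<Sum>l\<in>L. (l - a) *s v l)" using insert.hyps by simp
  finally have eqs: "f *v ?s - a *s ?s = (\<Sum>l\<in>L. (l - a) *s v l)" .
  have fsW: "f *v ?s \<in> W" using inv insert.prems(2) by (rule bspec)
  have "f *v ?s - a *s ?s \<in> W"
    by (rule vec.subspace_diff[OF W fsW vec.subspace_scale[OF W insert.prems(2)]])
  then have sW: "(\<Sum>l\<in>L. (l - a) *s v l) \<in> W" unfolding eqs .
  have eig: "\<forall>l\<in>L. f *v ((l - a) *s v l) = l *s ((l - a) *s v l)"
  proof
    fix l assume "l \<in> L"
    then have "f *v v l = l *s v l" using insert.prems(1) by simp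
    then show "f *v ((l - a) *s v l) = l *s ((l - a) *s v l)"
      by (simp only: vec.scale vec.scale_scale mult.commute)
  qed
  have IH: "\<forall>l\<in>L. (l - a) *s v l \<in> W" using insert.IH[OF eig sW] .
  have L: "\<forall>l\<in>L. v l \<in> W"
  proof
    fix l assume l: "l \<in> L"
    then have ne: "l - a \<noteq> 0" using insert.hyps(2) by auto
    have h: "(l - a) *s v l \<in> W" using IH l by (rule bspec)
    have e: "(1 / (l - a)) *s ((l - a) *s v l) = v l" unfolding vec.scale_scale using ne by simp
    show "v l \<in> W" using vec.subspace_scale[OF W h, of "1 / (l - a)"] unfolding e .
  qed
  have "(\<Sum>l\<in>L. v l) \<in> W" using L W by (simp add: vec.subspace_sum)
  moreover have "v a = ?s - (\<Sum>l\<in>L. v l)" using s by simp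
  ultimately have "v a \<in> W" using vec.subspace_diff[OF W insert.prems(2)] by simp
  then show ?case using L by simp
qed

lemma RES:
  assumes W: "vec.subspace W" and inv: "\<forall>w\<in>W. f *v w \<in> W" and d: "dg f"
  shows "W \<subseteq> vec.span {v\<in>W. \<exists>\<mu>. f *v v = \<mu> *s v}"
proof
  fix x assume x: "x \<in> W"
  have "x \<in> vec.span (eigs f)" using d unfolding dg_def by (rule subsetD) simp
  from REP[OF this] obtain L v where L: "finite L" "\<forall>l\<in>L. f *v v l = l *s v l" "x = (\<Sum>l\<in>L. v l)"
    by (elim exE conjE) (rule that)
  have inW: "\<forall>l\<in>L. v l \<in> W" using VAND[OF W inv L(1) L(2)] x L(3) by simp
  have "\<forall>l\<in>L. v l \<in> vec.span {v\<in>W. \<exists>\<mu>. f *v v = \<mu> *s v}"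
    using inW L(2) by (auto intro: vec.span_base)
  then show "x \<in> vec.span {v\<in>W. \<exists>\<mu>. f *v v = \<mu> *s v}"
    unfolding L(3) by (intro vec.span_sum) auto
qed



definition nondeg :: "(complex^'n) set \<Rightarrow> bool" where
  "nondeg W \<longleftrightarrow> (\<forall>w\<in>W. (\<forall>v\<in>W. bd w v = 0) \<longrightarrow> w = 0)"
definition jeig :: "(complex^'n^'n) set \<Rightarrow> complex^'n \<Rightarrow> bool" where
  "jeig F q \<longleftrightarrow> (\<forall>f\<in>F. \<exists>\<mu>. f *v q = \<mu> *s q)"
definition invar :: "(complex^'n^'n) set \<Rightarrow> (complex^'n) set \<Rightarrow> bool" where
  "invar F W \<longleftrightarrow> (\<forall>f\<in>F. \<forall>w\<in>W. f *v w \<in> W)"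
definition good :: "(complex^'n^'n) set \<Rightarrow> (complex^'n) set \<Rightarrow> (complex^'n) set \<Rightarrow> bool" where
  "good F W Q \<longleftrightarrow> Q \<subseteq> W \<and> ON Q \<and> W \<subseteq> vec.span Q \<and> (\<forall>q\<in>Q. jeig F q)"

lemma dim_less:
  assumes "vec.subspace A" "vec.subspace B" "A \<subseteq> B" "A \<noteq> B"
  shows "vec.dim A < vec.dim B"
proof -
  have sA: "vec.span A = A" using assms(1) vec.span_eq_iff by blast
  have sB: "vec.span B = B" using assms(2) vec.span_eq_iff by blast
  have "vec.span A \<subset> vec.span B" unfolding sA sB using assms(3,4) by blast
  then show ?thesis by (rule vec.dim_psubset)
qed

lemma SPL:
  assumes sym: "\<forall>f\<in>F. transpose f = f"
    and W: "vec.subspace W" "nondeg W" "invar F W"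
    and Q1: "Q1 \<subseteq> W" "Q1 \<noteq> {}" "ON Q1" "\<forall>q\<in>Q1. jeig F q" "invar F (vec.span Q1)"
    and IH: "\<And>W'. vec.dim W' < vec.dim W \<Longrightarrow> vec.subspace W' \<Longrightarrow> nondeg W' \<Longrightarrow> invar F W' \<Longrightarrow> \<exists>Q. good F W' Q"
  shows "\<exists>Q. good F W Q"
proof -
  define W2 where "W2 = {v\<in>W. \<forall>q\<in>Q1. bd q v = 0}"
  define pr where "pr x = (\<Sum>p\<in>Q1. bd p x *s p)" for x
  have spanW: "vec.span Q1 \<subseteq> W" by (rule vec.span_minimal[OF Q1(1) W(1)])
  have pr_span: "pr x \<in> vec.span Q1" for x
    unfolding pr_def by (intro vec.span_sum vec.span_scale vec.span_base)
  have pr_W: "pr x \<in> W" for x using pr_span spanW by blast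
  have x2: "x - pr x \<in> W2" if x: "x \<in> W" for x
  proof -
    have "x - pr x \<in> W" by (rule vec.subspace_diff[OF W(1) x pr_W])
    moreover have "\<forall>q\<in>Q1. bd q (x - pr x) = 0" unfolding pr_def using ON_proj[OF Q1(3)] by blast
    ultimately show ?thesis unfolding W2_def by blast
  qed
  have W2W: "W2 \<subseteq> W" unfolding W2_def by blast
  have sub2: "vec.subspace W2"
    unfolding vec.subspace_def
  proof (intro conjI ballI allI)
    show "0 \<in> W2" unfolding W2_def using vec.subspace_0[OF W(1)] by simp
  next
    fix x y assume "x \<in> W2" "y \<in> W2"
    then show "x + y \<in> W2" unfolding W2_def using vec.subspace_add[OF W(1)] by (simp add: bd_add_right)
  next
    fix c x assume "x \<in> W2"
    then show "c *s x \<in> W2" unfolding W2_def using vec.subspace_scale[OF W(1)] by (simp add: bd_scale_right)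
  qed
  have inv2: "invar F W2"
    unfolding invar_def
  proof (intro ballI)
    fix f v assume f: "f \<in> F" and v: "v \<in> W2"
    have fvW: "f *v v \<in> W" using W(3) f v W2W unfolding invar_def by blast
    have "bd q (f *v v) = 0" if q: "q \<in> Q1" for q
    proof -
      have tf: "transpose f = f" using sym f by blast
      have "bd q (f *v v) = bd v (transpose f *v q)" by (simp only: bd_comm[of q] bd_mv)
      also have "\<dots> = bd v (f *v q)" unfolding tf ..
      also have "\<dots> = 0"
      proof (rule span_bd0)
        show "f *v q \<in> vec.span Q1" using Q1(5) f q vec.span_base[OF q] unfolding invar_def by blast
        fix s assume "s \<in> Q1" then show "bd v s = 0" using v unfolding W2_def by (simp add: bd_comm)
      qed
      finally show ?thesis .
    qed
    then show "f *v v \<in> W2" unfolding W2_def using fvW by blast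
  qed
  have nd2: "nondeg W2"
    unfolding nondeg_def
  proof (intro ballI impI)
    fix w assume w: "w \<in> W2" and o: "\<forall>v\<in>W2. bd w v = 0"
    have "bd w x = 0" if x: "x \<in> W" for x
    proof -
      have "bd w x = bd w (x - pr x) + bd w (pr x)" by (simp add: bd_diff_right)
      moreover have "bd w (x - pr x) = 0" using o x2[OF x] by blast
      moreover have "bd w (pr x) = 0"
        by (rule span_bd0[OF pr_span]) (use w in \<open>simp add: W2_def bd_comm\<close>)
      ultimately show ?thesis by simp
    qed
    then show "w = 0" using W(2) w W2W unfolding nondeg_def by blast
  qed
  obtain q0 where q0: "q0 \<in> Q1" using Q1(2) by blast
  have one: "bd q0 q0 = 1" using ON_bd[OF Q1(3) q0 q0] by simp
  have "q0 \<notin> W2"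
  proof
    assume "q0 \<in> W2"
    then have "bd q0 q0 = 0" using q0 unfolding W2_def by blast
    then show False using one by simp
  qed
  then have "W2 \<noteq> W" using q0 Q1(1) by blast
  then have "vec.dim W2 < vec.dim W" by (rule dim_less[OF sub2 W(1) W2W])
  from IH[OF this sub2 nd2 inv2] obtain Q2 where Q2: "good F W2 Q2" by blast
  then have Q2': "Q2 \<subseteq> W2" "ON Q2" "W2 \<subseteq> vec.span Q2" "\<forall>q\<in>Q2. jeig F q"
    unfolding good_def by auto
  have cross: "bd p q = 0" if "p \<in> Q1" "q \<in> Q2" for p q
    using that Q2'(1) unfolding W2_def by blast
  have crossne: "p \<noteq> q" if "p \<in> Q1" "q \<in> Q2" for p q
  proof
    assume "p = q"
    then have "bd q q = 0" using cross[OF that] by simp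
    moreover have "bd q q = 1" using ON_bd[OF Q2'(2) that(2) that(2)] by simp
    ultimately show False by simp
  qed
  have ON12: "ON (Q1 \<union> Q2)"
    unfolding ON_def
  proof (intro ballI)
    fix p q assume p: "p \<in> Q1 \<union> Q2" and q: "q \<in> Q1 \<union> Q2"
    show "bd p q = (if p = q then 1 else 0)"
    proof (cases "p \<in> Q1")
      case pQ1: True
      show ?thesis
      proof (cases "q \<in> Q1")
        case True then show ?thesis using ON_bd[OF Q1(3) pQ1] by simp
      next
        case False then have "q \<in> Q2" using q by simp
        then show ?thesis using cross[OF pQ1] crossne[OF pQ1] by simp
      qed
    next
      case pQ2: False
      then have pQ2: "p \<in> Q2" using p by simp
      show ?thesis
      proof (cases "q \<in> Q1")
        case True then show ?thesis using cross[OF True pQ2] crossne[OF True pQ2] by (simp add: bd_comm)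
      next
        case False then have "q \<in> Q2" using q by simp
        then show ?thesis using ON_bd[OF Q2'(2) pQ2] by simp
      qed
    qed
  qed
  have span12: "W \<subseteq> vec.span (Q1 \<union> Q2)"
  proof
    fix x assume x: "x \<in> W"
    have "pr x \<in> vec.span (Q1 \<union> Q2)" using pr_span vec.span_mono[of Q1 "Q1 \<union> Q2"] by blast
    moreover have "x - pr x \<in> vec.span (Q1 \<union> Q2)"
      using x2[OF x] Q2'(3) vec.span_mono[of Q2 "Q1 \<union> Q2"] by blast
    ultimately have "pr x + (x - pr x) \<in> vec.span (Q1 \<union> Q2)" by (rule vec.span_add)
    then show "x \<in> vec.span (Q1 \<union> Q2)" by simp
  qed
  have "good F W (Q1 \<union> Q2)"
    unfolding good_def using Q1(1) Q2'(1) W2W ON12 span12 Q1(4) Q2'(4) by blast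
  then show ?thesis by blast
qed



lemma JE_gen:
  assumes sym: "\<forall>f\<in>F. transpose f = f" and comm: "\<forall>f\<in>F. \<forall>g\<in>F. f ** g = g ** f"
    and dgF: "\<forall>f\<in>F. dg f"
  shows "vec.subspace W \<Longrightarrow> nondeg W \<Longrightarrow> invar F W \<Longrightarrow> \<exists>Q. good F W Q"
proof (induction "vec.dim W" arbitrary: W rule: less_induct)
  case less
  note IH = less.hyps
  have W: "vec.subspace W" "nondeg W" "invar F W" using less.prems by auto
  show ?case
  proof (cases "W \<subseteq> {0}")
    case True
    have "good F W {}" unfolding good_def ON_def using True by (simp add: vec.span_empty)
    then show ?thesis by blast
  next
    case False
    then obtain w0 where w0: "w0 \<in> W" "w0 \<noteq> 0" by blast
    show ?thesis
    proof (cases "\<exists>f\<in>F. \<forall>c. \<exists>w\<in>W. f *v w \<noteq> c *s w")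
      case True
      then obtain f where f: "f \<in> F" and nsc: "\<And>c. \<exists>w\<in>W. f *v w \<noteq> c *s w" by blast
      have invf: "\<forall>w\<in>W. f *v w \<in> W" using W(3) f unfolding invar_def by blast
      have tf: "transpose f = f" using sym f by blast
      have res: "W \<subseteq> vec.span {v\<in>W. \<exists>\<mu>. f *v v = \<mu> *s v}"
        by (rule RES[OF W(1) invf]) (use dgF f in blast)
      have "\<exists>v0 \<mu>0. v0 \<in> W \<and> v0 \<noteq> 0 \<and> f *v v0 = \<mu>0 *s v0"
      proof (rule ccontr)
        assume "\<not> ?thesis"
        then have "{v\<in>W. \<exists>\<mu>. f *v v = \<mu> *s v} \<subseteq> vec.span {}" by (auto simp: vec.span_empty)
        then have "vec.span {v\<in>W. \<exists>\<mu>. f *v v = \<mu> *s v} \<subseteq> vec.span {}"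
          by (rule vec.span_minimal[OF _ vec.subspace_span])
        then have "w0 \<in> vec.span {}" using res w0(1) by blast
        then show False using w0(2) by (simp add: vec.span_empty)
      qed
      then obtain v0 \<mu>0 where v0: "v0 \<in> W" "v0 \<noteq> 0" "f *v v0 = \<mu>0 *s v0" by blast
      define W1 where "W1 = {w\<in>W. f *v w = \<mu>0 *s w}"
      have W1W: "W1 \<subseteq> W" unfolding W1_def by blast
      have sub1: "vec.subspace W1"
        unfolding vec.subspace_def
      proof (intro conjI ballI allI)
        show "0 \<in> W1" unfolding W1_def using vec.subspace_0[OF W(1)] by simp
      next
        fix x y assume "x \<in> W1" "y \<in> W1"
        then show "x + y \<in> W1" unfolding W1_def using vec.subspace_add[OF W(1)]
          by (simp add: vec.add vec.scale_right_distrib)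
      next
        fix c x assume "x \<in> W1"
        then show "c *s x \<in> W1" unfolding W1_def using vec.subspace_scale[OF W(1)]
          by (simp add: vec.scale vec.scale_scale mult.commute)
      qed
      have v0W1: "v0 \<in> W1" unfolding W1_def using v0 by blast
      obtain w1 where w1: "w1 \<in> W" "f *v w1 \<noteq> \<mu>0 *s w1" using nsc by blast
      have "w1 \<notin> W1" using w1 unfolding W1_def by blast
      then have "W1 \<noteq> W" using w1(1) by blast
      then have dim1: "vec.dim W1 < vec.dim W" by (rule dim_less[OF sub1 W(1) W1W])
      have inv1: "invar F W1"
        unfolding invar_def
      proof (intro ballI)
        fix g w assume g: "g \<in> F" and w: "w \<in> W1"
        have gw: "g *v w \<in> W" using W(3) g w W1W unfolding invar_def by blast
        have "f *v (g *v w) = (f ** g) *v w" by (simp add: matrix_vector_mul_assoc)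
        also have "\<dots> = (g ** f) *v w" using comm f g by simp
        also have "\<dots> = g *v (f *v w)" by (simp add: matrix_vector_mul_assoc)
        also have "\<dots> = g *v (\<mu>0 *s w)" using w unfolding W1_def by simp
        also have "\<dots> = \<mu>0 *s (g *v w)" by (simp add: vec.scale)
        finally show "g *v w \<in> W1" unfolding W1_def using gw by blast
      qed
      have nd1: "nondeg W1"
        unfolding nondeg_def
      proof (intro ballI impI)
        fix w assume w: "w \<in> W1" and o: "\<forall>v\<in>W1. bd w v = 0"
        have fw: "f *v w = \<mu>0 *s w" using w unfolding W1_def by blast
        have "bd w u = 0" if u: "u \<in> W" for u
        proof (rule span_bd0)
          show "u \<in> vec.span {v\<in>W. \<exists>\<mu>. f *v v = \<mu> *s v}" using res u by blast
        next
          fix s assume s: "s \<in> {v\<in>W. \<exists>\<mu>. f *v v = \<mu> *s v}"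
          then obtain \<mu> where sW: "s \<in> W" and fs: "f *v s = \<mu> *s s" by blast
          show "bd w s = 0"
          proof (cases "\<mu> = \<mu>0")
            case True
            then have "s \<in> W1" unfolding W1_def using sW fs by blast
            then show ?thesis using o by blast
          next
            case False
            have "\<mu>0 * bd w s = bd (f *v w) s" unfolding fw bd_scale_left ..
            also have "\<dots> = bd w (transpose f *v s)" by (rule bd_mv)
            also have "\<dots> = \<mu> * bd w s" unfolding tf fs bd_scale_right ..
            finally have "(\<mu>0 - \<mu>) * bd w s = 0" by (simp add: left_diff_distrib)
            then show ?thesis using False by simp
          qed
        qed
        then show "w = 0" using W(2) w W1W unfolding nondeg_def by blast
      qed
      from IH[OF dim1 sub1 nd1 inv1] obtain Q1 where Q1: "good F W1 Q1" by blast
      then have Q1': "Q1 \<subseteq> W1" "ON Q1" "W1 \<subseteq> vec.span Q1" "\<forall>q\<in>Q1. jeig F q"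
        unfolding good_def by auto
      have ne: "Q1 \<noteq> {}"
      proof
        assume "Q1 = {}"
        then have "v0 \<in> vec.span {}" using Q1'(3) v0W1 by blast
        then show False using v0(2) by (simp add: vec.span_empty)
      qed
      have "vec.span Q1 = W1" by (rule vec.span_subspace[OF Q1'(1) Q1'(3) sub1])
      then have invs: "invar F (vec.span Q1)" using inv1 by simp
      show ?thesis
        by (rule SPL[OF sym W _ ne Q1'(2) Q1'(4) invs IH]) (use Q1'(1) W1W in blast)+
    next
      case False
      then have sc: "\<forall>f\<in>F. \<exists>c. \<forall>w\<in>W. f *v w = c *s w" by blast
      obtain v1 where v1: "v1 \<in> W" "bd w0 v1 \<noteq> 0" using W(2) w0 unfolding nondeg_def by blast
      have "\<exists>p\<in>W. bd p p \<noteq> 0"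
      proof -
        have "w0 + v1 \<in> W" by (rule vec.subspace_add[OF W(1) w0(1) v1(1)])
        then show ?thesis using nonisotropic[OF v1(2)] w0(1) v1(1) by blast
      qed
      then obtain p where p: "p \<in> W" "bd p p \<noteq> 0" by blast
      define q where "q = (1 / csqrt (bd p p)) *s p"
      have qW: "q \<in> W" unfolding q_def by (rule vec.subspace_scale[OF W(1) p(1)])
      have qq: "bd q q = 1" unfolding q_def by (rule normalize_unit[OF p(2)])
      have ONq: "ON {q}" unfolding ON_def using qq by simp
      have jq: "\<forall>q'\<in>{q}. jeig F q'" unfolding jeig_def using sc qW by blast
      have invs: "invar F (vec.span {q})"
        unfolding invar_def vec.span_singleton
      proof (intro ballI)
        fix f w assume f: "f \<in> F" and w: "w \<in> range (\<lambda>k. k *s q)"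
        then obtain k where k: "w = k *s q" by blast
        obtain c where c: "\<forall>w\<in>W. f *v w = c *s w" using sc f by blast
        have "f *v w = (k * c) *s q" unfolding k vec.scale using c qW by (simp add: vec.scale_scale)
        then show "f *v w \<in> range (\<lambda>k. k *s q)" by blast
      qed
      show ?thesis
        by (rule SPL[OF sym W _ _ ONq jq invs IH]) (use qW in auto)
    qed
  qed
qed

lemma JE:
  assumes sym: "\<forall>f\<in>F. transpose f = f" and comm: "\<forall>f\<in>F. \<forall>g\<in>F. f ** g = g ** f"
    and dgF: "\<forall>f\<in>F. dg f"
  shows "\<exists>Q. ON Q \<and> vec.span Q = UNIV \<and> (\<forall>q\<in>Q. jeig F q)"
proof -
  have "nondeg (UNIV :: (complex^'n) set)" unfolding nondeg_def using bd_nondeg by blast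
  moreover have "invar F UNIV" unfolding invar_def by blast
  ultimately obtain Q where "good F UNIV Q" using JE_gen[OF sym comm dgF vec.subspace_UNIV] by blast
  then show ?thesis unfolding good_def by auto
qed



definition ONf :: "('n \<Rightarrow> complex^'n) \<Rightarrow> 'n set \<Rightarrow> bool" where
  "ONf b I \<longleftrightarrow> (\<forall>i\<in>I. \<forall>j\<in>I. bd (b i) (b j) = (if i = j then 1 else 0))"

lemma ONf_bd: "ONf b I \<Longrightarrow> i \<in> I \<Longrightarrow> j \<in> I \<Longrightarrow> bd (b i) (b j) = (if i = j then 1 else 0)"
  unfolding ONf_def by blast

lemma ONf_proj: assumes "ONf b I" "i \<in> I"
  shows "bd (b i) (x - (\<Sum>j\<in>I. bd (b j) x *s b j)) = 0"
proof -
  have "bd (b i) (\<Sum>j\<in>I. bd (b j) x *s b j) = (\<Sum>j\<in>I. bd (b j) x * bd (b i) (b j))"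
    by (simp add: bd_sum_right bd_scale_right)
  also have "\<dots> = (\<Sum>j\<in>I. if j = i then bd (b j) x else 0)"
  proof (rule sum.cong)
    fix j assume "j \<in> I"
    then have "bd (b i) (b j) = (if i = j then 1 else 0)" using ONf_bd[OF assms(1) assms(2)] by blast
    then show "bd (b j) x * bd (b i) (b j) = (if j = i then bd (b j) x else 0)" by auto
  qed (rule refl)
  also have "\<dots> = bd (b i) x" using assms(2) by simp
  finally have "bd (b i) (\<Sum>j\<in>I. bd (b j) x *s b j) = bd (b i) x" .
  then show ?thesis unfolding bd_diff_right by simp
qed

lemma NEWV:
  fixes b :: "'n \<Rightarrow> complex^'n"
  assumes ON: "ONf b I" and ne: "I \<noteq> UNIV"
  shows "\<exists>v. bd v v = 1 \<and> (\<forall>i\<in>I. bd (b i) v = 0)"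
proof -
  define pr where "pr x = x - (\<Sum>j\<in>I. bd (b j) x *s b j)" for x
  have orth: "bd (b i) (pr x) = 0" if "i \<in> I" for i x
    unfolding pr_def by (rule ONf_proj[OF ON that])
  have "card (b ` I) \<le> card I" by (rule card_image_le) simp
  also have "card I < card (UNIV :: 'n set)" using ne by (simp add: psubset_card_mono psubset_eq)
  finally have cardlt: "card (b ` I) < CARD('n)" .
  have "vec.span (b ` I) \<noteq> UNIV"
  proof
    assume sp: "vec.span (b ` I) = UNIV"
    have "vec.dim (UNIV :: (complex^'n) set) \<le> card (b ` I)"
      by (rule vec.dim_le_card) (use sp in auto)
    moreover have "vec.dim (UNIV :: (complex^'n) set) = CARD('n)" by (rule vec_dim_card)
    ultimately show False using cardlt by linarith
  qed
  then obtain e where e: "e \<notin> vec.span (b ` I)" by blast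
  define w where "w = pr e"
  have w0: "w \<noteq> 0"
  proof
    assume "w = 0"
    then have "e = (\<Sum>j\<in>I. bd (b j) e *s b j)" unfolding w_def pr_def by simp
    moreover have "(\<Sum>j\<in>I. bd (b j) e *s b j) \<in> vec.span (b ` I)"
      by (intro vec.span_sum vec.span_scale vec.span_base) simp
    ultimately show False using e by simp
  qed
  have "\<exists>m. w$m \<noteq> 0"
  proof (rule ccontr)
    assume "\<not> ?thesis"
    then have "w = 0" by (simp add: vec_eq_iff)
    then show False using w0 by simp
  qed
  then obtain m where m: "w$m \<noteq> 0" by blast
  define x' where "x' = pr (axis m 1)"
  have "bd w x' = bd w (axis m 1) - (\<Sum>j\<in>I. bd (b j) (axis m 1) * bd w (b j))"
    unfolding x'_def pr_def by (simp add: bd_diff_right bd_sum_right bd_scale_right)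
  also have "(\<Sum>j\<in>I. bd (b j) (axis m 1) * bd w (b j)) = 0"
    by (rule sum.neutral) (simp add: w_def bd_comm[of "pr e"] orth)
  finally have wx: "bd w x' \<noteq> 0" using m by (simp add: bd_axis)
  have o1: "\<forall>i\<in>I. bd (b i) w = 0" unfolding w_def using orth by blast
  have o2: "\<forall>i\<in>I. bd (b i) x' = 0" unfolding x'_def using orth by blast
  have o3: "\<forall>i\<in>I. bd (b i) (w + x') = 0" using o1 o2 by (simp add: bd_add_right)
  have "\<exists>p. bd p p \<noteq> 0 \<and> (\<forall>i\<in>I. bd (b i) p = 0)"
  proof (cases "bd w w \<noteq> 0")
    case True then show ?thesis using o1 by blast
  next
    case False
    show ?thesis
    proof (cases "bd x' x' \<noteq> 0")
      case True then show ?thesis using o2 by blast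
    next
      case False
      then have "bd (w + x') (w + x') \<noteq> 0" using nonisotropic[OF wx] \<open>\<not> bd w w \<noteq> 0\<close> by simp
      then show ?thesis using o3 by blast
    qed
  qed
  then obtain p where p: "bd p p \<noteq> 0" "\<forall>i\<in>I. bd (b i) p = 0" by blast
  define v where "v = (1 / csqrt (bd p p)) *s p"
  have "bd v v = 1" unfolding v_def by (rule normalize_unit[OF p(1)])
  moreover have "\<forall>i\<in>I. bd (b i) v = 0" unfolding v_def using p(2) by (simp add: bd_scale_right)
  ultimately show ?thesis by blast
qed

lemma EXT:
  fixes b :: "'n \<Rightarrow> complex^'n"
  shows "ONf b I \<Longrightarrow> \<exists>b'. (\<forall>i\<in>I. b' i = b i) \<and> ONf b' UNIV"
proof (induction "card (UNIV - I)" arbitrary: b I rule: less_induct)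
  case less
  show ?case
  proof (cases "I = UNIV")
    case True then show ?thesis using less.prems by (intro exI[of _ b]) simp
  next
    case False
    then obtain j where j: "j \<notin> I" by blast
    obtain v where v: "bd v v = 1" "\<forall>i\<in>I. bd (b i) v = 0" using NEWV[OF less.prems False] by blast
    define b2 where "b2 = b(j := v)"
    have ON2: "ONf b2 (insert j I)"
      unfolding ONf_def
    proof (intro ballI)
      fix i i' assume i: "i \<in> insert j I" and i': "i' \<in> insert j I"
      show "bd (b2 i) (b2 i') = (if i = i' then 1 else 0)"
      proof (cases "i = j")
        case True
        show ?thesis
        proof (cases "i' = j")
          case True then show ?thesis using \<open>i = j\<close> v by (simp add: b2_def)
        next
          case False then have "i' \<in> I" using i' by simp
          then show ?thesis using \<open>i = j\<close> False v(2) bd_comm[of v "b i'"] by (simp add: b2_def)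
        qed
      next
        case False then have iI: "i \<in> I" using i by simp
        show ?thesis
        proof (cases "i' = j")
          case True then show ?thesis using iI False v by (simp add: b2_def)
        next
          case False then have "i' \<in> I" using i' by simp
          then show ?thesis using iI \<open>i \<noteq> j\<close> False ONf_bd[OF less.prems iI] by (simp add: b2_def)
        qed
      qed
    qed
    have "card (UNIV - insert j I) < card (UNIV - I)"
      by (rule psubset_card_mono) (use j in auto)
    from less.hyps[OF this ON2] obtain b' where b': "\<forall>i\<in>insert j I. b' i = b2 i" "ONf b' UNIV" by blast
    have "\<forall>i\<in>I. b' i = b i" using b'(1) j by (auto simp: b2_def)
    then show ?thesis using b'(2) by blast
  qed
qed

lemma ON_basis_matrix:
  assumes "ON Q" "vec.span Q = UNIV"
  shows "\<exists>C::complex^'n^'n. (\<forall>i. C$i \<in> Q) \<and> ONf (\<lambda>i. C$i) UNIV"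
proof -
  have ind: "vec.independent Q" by (rule ON_indep[OF assms(1)])
  have fin: "finite Q" by (rule ON_finite[OF assms(1)])
  have "card Q = vec.dim (vec.span Q)" using vec.dim_span_eq_card_independent[OF ind] by simp
  also have "\<dots> = CARD('n)" unfolding assms(2) by (rule vec_dim_card)
  finally have "card (UNIV :: 'n set) = card Q" by simp
  moreover have fU: "finite (UNIV :: 'n set)" by simp
  ultimately obtain h where h: "bij_betw h (UNIV :: 'n set) Q"
    using finite_same_card_bij[OF fU fin] by blast
  from h have h: "bij_betw h (UNIV :: 'n set) Q" .
  define C where "C = ((\<chi> i. h i) :: complex^'n^'n)"
  have Ci: "C$i = h i" for i unfolding C_def by simp
  have hQ: "h i \<in> Q" for i using bij_betw_apply[OF h] by simp
  have hinj: "h i = h j \<longleftrightarrow> i = j" for i j using inj_onD[OF bij_betw_imp_inj_on[OF h]] by auto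
  have "\<forall>i. C$i \<in> Q" unfolding Ci using hQ by simp
  moreover have "ONf (\<lambda>i. C$i) UNIV"
    unfolding ONf_def Ci
  proof (intro ballI)
    fix i j :: 'n
    show "bd (h i) (h j) = (if i = j then 1 else 0)" using ON_bd[OF assms(1) hQ hQ] hinj by simp
  qed
  ultimately show ?thesis by blast
qed

lemma mm_bd: "(C ** transpose D)$i$j = bd (C$i) (D$j)"
  unfolding matrix_matrix_mult_def transpose_def bd_def by simp

lemma ONf_mat: assumes "ONf (\<lambda>i. C$i) UNIV"
  shows "C ** transpose C = mat 1" "transpose C ** C = mat 1"
proof -
  show 1: "C ** transpose C = mat 1"
  proof (rule iffD2[OF vec_eq_iff], intro allI)
    fix i
    show "(C ** transpose C)$i = mat 1 $ i"
    proof (rule iffD2[OF vec_eq_iff], intro allI)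
      fix j
      show "(C ** transpose C)$i$j = mat 1 $ i $ j"
        unfolding mm_bd using ONf_bd[OF assms] by (simp add: mat_def)
    qed
  qed
  show "transpose C ** C = mat 1" using 1 matrix_left_right_inverse by blast
qed

lemma corth_rows: assumes "transpose C ** C = mat 1"
  shows "(\<Sum>i\<in>UNIV. C$i$k * C$i$l) = (if k = l then 1 else 0)"
proof -
  have "(transpose C ** C)$k$l = (if k = l then 1 else 0)" using assms by (simp add: mat_def)
  then show ?thesis unfolding matrix_matrix_mult_def transpose_def by simp
qed

lemma corth_cols: assumes "C ** transpose C = mat 1"
  shows "bd (C$i) (C$j) = (if i = j then 1 else 0)"
proof -
  have "(C ** transpose C)$i$j = (if i = j then 1 else 0)" using assms by (simp add: mat_def)
  then show ?thesis unfolding matrix_matrix_mult_def transpose_def bd_def by simp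
qed

lemma corth_expand: assumes "transpose C ** C = mat 1"
  shows "x = (\<Sum>i\<in>UNIV. bd (C$i) x *s C$i)"
proof -
  have "(\<Sum>i\<in>UNIV. bd (C$i) x *s C$i)$k = x$k" for k
  proof -
    have "(\<Sum>i\<in>UNIV. bd (C$i) x *s C$i)$k = (\<Sum>i\<in>UNIV. \<Sum>l\<in>UNIV. C$i$l * x$l * C$i$k)"
      by (simp add: bd_def sum_distrib_right)
    also have "\<dots> = (\<Sum>l\<in>UNIV. x$l * (\<Sum>i\<in>UNIV. C$i$k * C$i$l))"
    proof -
      have "(\<Sum>i\<in>UNIV. \<Sum>l\<in>UNIV. C$i$l * x$l * C$i$k) = (\<Sum>l\<in>UNIV. \<Sum>i\<in>UNIV. C$i$l * x$l * C$i$k)"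
        by (rule sum.swap)
      also have "\<dots> = (\<Sum>l\<in>UNIV. x$l * (\<Sum>i\<in>UNIV. C$i$k * C$i$l))"
        unfolding sum_distrib_left by (intro sum.cong refl) (simp only: ac_simps)
      finally show ?thesis .
    qed
    also have "\<dots> = (\<Sum>l\<in>UNIV. if l = k then x$l else 0)"
      using corth_rows[OF assms] by (intro sum.cong) auto
    also have "\<dots> = x$k" by simp
    finally show ?thesis .
  qed
  then show ?thesis by (simp add: vec_eq_iff)
qed



lemma mv_axis: fixes A :: "complex^'n^'m" shows "(A *v axis j 1)$i = A$i$j"
  by (simp add: mv_comp bd_axis)

lemma matrix_inv_props: assumes "invertible P"
  shows "P ** matrix_inv P = mat 1" "matrix_inv P ** P = mat 1"
proof -
  have "\<exists>A'. P ** A' = mat 1 \<and> A' ** P = mat 1" using assms unfolding invertible_def .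
  then have "P ** matrix_inv P = mat 1 \<and> matrix_inv P ** P = mat 1"
    unfolding matrix_inv_def by (rule someI_ex)
  then show "P ** matrix_inv P = mat 1" "matrix_inv P ** P = mat 1" by auto
qed

lemma diag_dg: fixes M :: "complex^'n^'n" assumes "diagonalizable M" shows "dg M"
proof -
  obtain P :: "complex^'n^'n" where P: "invertible P" "is_diag_mat (matrix_inv P ** M ** P)"
    using assms unfolding diagonalizable_def by blast
  define Q where "Q = matrix_inv P"
  define D where "D = Q ** M ** P"
  have PQ: "P ** Q = mat 1" "Q ** P = mat 1" unfolding Q_def using matrix_inv_props[OF P(1)] by auto
  have Dd: "\<And>i j. i \<noteq> j \<Longrightarrow> D$i$j = 0" using P(2) unfolding D_def Q_def is_diag_mat_def by blast
  have MP: "M ** P = P ** D"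
  proof -
    have "P ** D = (P ** Q) ** M ** P" unfolding D_def by (simp add: matrix_mul_assoc)
    then show ?thesis using PQ by simp
  qed
  have Daxis: "D *v axis j 1 = D$j$j *s axis j 1" for j
    unfolding vec_eq_iff mv_axis using Dd by (auto simp: axis_def)
  have eig: "P *v axis j 1 \<in> eigs M" for j
  proof -
    have "M *v (P *v axis j 1) = (M ** P) *v axis j 1" by (simp add: matrix_vector_mul_assoc)
    also have "\<dots> = P *v (D *v axis j 1)" unfolding MP by (simp add: matrix_vector_mul_assoc)
    also have "\<dots> = D$j$j *s (P *v axis j 1)" unfolding Daxis vec.scale ..
    finally show ?thesis unfolding eigs_def by blast
  qed
  show ?thesis
    unfolding dg_def
  proof
    fix x :: "complex^'n"
    have "x = P *v (Q *v x)" by (simp add: matrix_vector_mul_assoc PQ)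
    also have "Q *v x = (\<Sum>j\<in>UNIV. (Q *v x)$j *s axis j 1)" by (rule basis_expansion[symmetric])
    finally have "x = (\<Sum>j\<in>UNIV. (Q *v x)$j *s (P *v axis j 1))" by (simp add: vec.sum vec.scale)
    also have "\<dots> \<in> vec.span (eigs M)"
      by (intro vec.span_sum vec.span_scale vec.span_base eig)
    finally show "x \<in> vec.span (eigs M)" .
  qed
qed

lemma row_eq: "row i A = A$i"
  unfolding row_def by (simp add: vec_eq_iff)

lemma rows_mult_span: "row i (N ** M) \<in> vec.span (rows M)"
proof -
  have "row i (N ** M) = (\<Sum>j\<in>UNIV. N$i$j *s row j M)"
    unfolding row_eq vec_eq_iff by (simp add: matrix_matrix_mult_def row_def)
  also have "\<dots> \<in> vec.span (rows M)"
    by (intro vec.span_sum vec.span_scale vec.span_base) (auto simp: rows_def)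
  finally show ?thesis .
qed

lemma KER:
  fixes M :: "complex^'n^'n"
  assumes rk: "rank M = rank (transpose M ** M)" and v: "(transpose M ** M) *v v = 0"
  shows "M *v v = 0"
proof -
  let ?G = "transpose M ** M"
  have sub: "rows ?G \<subseteq> vec.span (rows M)" using rows_mult_span unfolding rows_def by blast
  have "vec.dim (vec.span (rows M)) \<le> vec.dim (rows ?G)"
    using rk unfolding row_rank_def_gen vec.dim_span by simp
  then have eq: "vec.span (rows ?G) = vec.span (vec.span (rows M))" by (rule vec.dim_eq_span[OF sub])
  have "bd v u = 0" if u: "u \<in> vec.span (rows ?G)" for u
  proof (rule span_bd0[OF u])
    fix s assume "s \<in> rows ?G"
    then obtain i where s: "s = ?G$i" unfolding rows_def row_eq by blast
    have "bd s v = (?G *v v)$i" unfolding s mv_comp ..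
    then show "bd v s = 0" using v by (simp add: bd_comm)
  qed
  moreover have "M$j \<in> vec.span (rows ?G)" for j
    unfolding eq vec.span_span using vec.span_base[of "M$j" "rows M"] unfolding rows_def row_eq by blast
  ultimately have "bd v (M$j) = 0" for j by blast
  then show ?thesis unfolding vec_eq_iff mv_comp by (simp add: bd_comm)
qed



declare transpose_matrix_vector[simp del]

lemma sc_parts:
  fixes M :: "'n \<Rightarrow> complex^'n^'n"
  assumes "slice_cond M"
  shows "diagonalizable (transpose (M k) ** M k)" "rank (M k) = rank (transpose (M k) ** M k)"
    "transpose (M k ** transpose (M l)) = M k ** transpose (M l)"
    "transpose (transpose (M k) ** M l) = transpose (M k) ** M l"
  using assms unfolding slice_cond_def by auto

lemma Sswap: fixes M :: "'n \<Rightarrow> complex^'n^'n" assumes "slice_cond M"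
  shows "transpose (M a) ** M b = transpose (M b) ** M a"
proof -
  have "transpose (transpose (M a) ** M b) = transpose (M b) ** M a" by (simp add: matrix_transpose_mul)
  then show ?thesis using sc_parts(4)[OF assms, of a b] by simp
qed

lemma Rswap: fixes M :: "'n \<Rightarrow> complex^'n^'n" assumes "slice_cond M"
  shows "M a ** transpose (M b) = M b ** transpose (M a)"
proof -
  have "transpose (M a ** transpose (M b)) = M b ** transpose (M a)" by (simp add: matrix_transpose_mul)
  then show ?thesis using sc_parts(3)[OF assms, of a b] by simp
qed

lemma assoc4: "(A ** B) ** (C ** D) = (A ** (B ** C)) ** D"
  by (simp add: matrix_mul_assoc)

lemma Sid: fixes M :: "'n \<Rightarrow> complex^'n^'n" assumes "slice_cond M"
  shows "(transpose (M a) ** M b) ** (transpose (M c) ** M d) = (transpose (M a) ** M c) ** (transpose (M b) ** M d)"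
  unfolding assoc4 Rswap[OF assms, of b c] ..

lemma Scomm: fixes M :: "'n \<Rightarrow> complex^'n^'n" assumes "slice_cond M"
  shows "(transpose (M a) ** M b) ** (transpose (M c) ** M d) = (transpose (M c) ** M d) ** (transpose (M a) ** M b)"
  unfolding Sid[OF assms, of a b c d] Sid[OF assms, of c d a b] Sswap[OF assms, of c a] Sswap[OF assms, of d b] ..

lemma MMM: fixes M :: "'n \<Rightarrow> complex^'n^'n" assumes "slice_cond M"
  shows "M a ** (transpose (M a) ** M b) = M b ** (transpose (M a) ** M a)"
proof -
  have "M a ** (transpose (M a) ** M b) = (M a ** transpose (M b)) ** M a"
    unfolding Sswap[OF assms, of a b] by (simp add: matrix_mul_assoc)
  also have "\<dots> = M b ** (transpose (M a) ** M a)"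
    unfolding Rswap[OF assms, of a b] by (simp add: matrix_mul_assoc)
  finally show ?thesis .
qed

lemma Mker: fixes M :: "'n \<Rightarrow> complex^'n^'n" assumes "slice_cond M"
  shows "(transpose (M k) ** M k) *v v = 0 \<Longrightarrow> M k *v v = 0"
  by (rule KER[OF sc_parts(2)[OF assms]])

lemma Sdg: fixes M :: "'n \<Rightarrow> complex^'n^'n" assumes sc: "slice_cond M"
  shows "dg (transpose (M a) ** M b)"
proof -
  define F0 where "F0 = range (\<lambda>k. transpose (M k) ** M k)"
  have sym0: "\<forall>f\<in>F0. transpose f = f" unfolding F0_def using sc_parts(4)[OF sc] by auto
  have comm0: "\<forall>f\<in>F0. \<forall>g\<in>F0. f ** g = g ** f" unfolding F0_def using Scomm[OF sc] by auto
  have dg0: "\<forall>f\<in>F0. dg f" unfolding F0_def using diag_dg sc_parts(1)[OF sc] by auto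
  obtain Q0 where Q0: "ON Q0" "vec.span Q0 = UNIV" "\<forall>q\<in>Q0. jeig F0 q"
    using JE[OF sym0 comm0 dg0] by blast
  let ?S = "transpose (M a) ** M b"
  have "q \<in> vec.span (eigs ?S)" if q: "q \<in> Q0" for q
  proof -
    have "\<exists>\<mu>. (transpose (M a) ** M a) *v q = \<mu> *s q" using Q0(3) q unfolding jeig_def F0_def by blast
    then obtain \<mu>a where \<mu>a: "(transpose (M a) ** M a) *v q = \<mu>a *s q" by blast
    have "\<exists>\<mu>. (transpose (M b) ** M b) *v q = \<mu> *s q" using Q0(3) q unfolding jeig_def F0_def by blast
    then obtain \<mu>b where \<mu>b: "(transpose (M b) ** M b) *v q = \<mu>b *s q" by blast
    show ?thesis
    proof (cases "\<mu>a = 0 \<or> \<mu>b = 0")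
      case True
      have "?S *v q = 0"
      proof (cases "\<mu>a = 0")
        case True
        then have "M a *v q = 0" using Mker[OF sc] \<mu>a by simp
        then show ?thesis unfolding Sswap[OF sc, of a b] matrix_vector_mul_assoc[symmetric] by simp
      next
        case False
        then have "\<mu>b = 0" using \<open>\<mu>a = 0 \<or> \<mu>b = 0\<close> by simp
        then have "M b *v q = 0" using Mker[OF sc] \<mu>b by simp
        then show ?thesis unfolding matrix_vector_mul_assoc[symmetric] by simp
      qed
      then have "q \<in> eigs ?S" unfolding eigs_def by (intro CollectI exI[of _ 0]) simp
      then show ?thesis by (rule vec.span_base)
    next
      case False
      define y where "y = ?S *v q"
      define r where "r = csqrt (\<mu>a * \<mu>b)"
      have rr: "r * r = \<mu>a * \<mu>b" unfolding r_def by (rule csqrt_sq)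
      have r0: "r \<noteq> 0" using rr False by auto
      have Sy: "?S *v y = (r * r) *s q"
      proof -
        have "?S *v y = (?S ** ?S) *v q" unfolding y_def by (simp add: matrix_vector_mul_assoc)
        also have "\<dots> = (transpose (M a) ** M a) *v ((transpose (M b) ** M b) *v q)"
          unfolding Sid[OF sc, of a b a b] by (simp add: matrix_vector_mul_assoc)
        also have "\<dots> = (\<mu>b * \<mu>a) *s q" unfolding \<mu>b vec.scale \<mu>a by (simp add: vec.scale_scale)
        finally show ?thesis using rr by (simp add: mult.commute)
      qed
      define u1 where "u1 = q + (1 / r) *s y"
      define u2 where "u2 = q - (1 / r) *s y"
      have e1: "?S *v u1 = r *s u1"
      proof -
        have "?S *v u1 = ?S *v q + (1 / r) *s (?S *v y)" unfolding u1_def vec.add vec.scale y_def ..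
        then have "?S *v u1 = y + (1 / r) *s ((r * r) *s q)" unfolding Sy by (simp add: y_def)
        then show ?thesis unfolding u1_def using r0 by (simp add: vec_eq_iff field_simps)
      qed
      have e2: "?S *v u2 = (- r) *s u2"
      proof -
        have "?S *v u2 = ?S *v q - (1 / r) *s (?S *v y)" unfolding u2_def vec.diff vec.scale y_def ..
        then have "?S *v u2 = y - (1 / r) *s ((r * r) *s q)" unfolding Sy by (simp add: y_def)
        then show ?thesis unfolding u2_def using r0 by (simp add: vec_eq_iff field_simps)
      qed
      have qe: "q = (1/2) *s u1 + (1/2) *s u2" unfolding u1_def u2_def by (simp add: vec_eq_iff field_simps)
      have "u1 \<in> eigs ?S" "u2 \<in> eigs ?S" unfolding eigs_def using e1 e2 by blast+
      then have "(1/2) *s u1 + (1/2) *s u2 \<in> vec.span (eigs ?S)"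
        by (intro vec.span_add vec.span_scale vec.span_base)
      then show ?thesis using qe by simp
    qed
  qed
  then have "vec.span Q0 \<subseteq> vec.span (eigs ?S)" by (intro vec.span_minimal vec.subspace_span) blast
  then show ?thesis unfolding dg_def Q0(2) .
qed



lemma XDEC:
  fixes M :: "'n \<Rightarrow> complex^'n^'n"
  assumes sc: "slice_cond M"
  shows "\<exists>B C W :: complex^'n^'n. ONf (\<lambda>i. B$i) UNIV \<and> ONf (\<lambda>i. C$i) UNIV \<and>
     (\<forall>k j l. M k $ j $ l = (\<Sum>i\<in>UNIV. W$i$k * B$i$j * C$i$l))"
proof -
  define F where "F = {transpose (M a) ** M b | a b. True}"
  have symF: "\<forall>f\<in>F. transpose f = f" unfolding F_def using sc_parts(4)[OF sc] by auto
  have commF: "\<forall>f\<in>F. \<forall>g\<in>F. f ** g = g ** f" unfolding F_def using Scomm[OF sc] by auto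
  have dgF: "\<forall>f\<in>F. dg f" unfolding F_def using Sdg[OF sc] by auto
  obtain Q where Q: "ON Q" "vec.span Q = UNIV" "\<forall>q\<in>Q. jeig F q" using JE[OF symF commF dgF] by blast
  obtain C :: "complex^'n^'n" where C: "\<forall>i. C$i \<in> Q" "ONf (\<lambda>i. C$i) UNIV"
    using ON_basis_matrix[OF Q(1) Q(2)] by blast
  have Cm: "C ** transpose C = mat 1" "transpose C ** C = mat 1" using ONf_mat[OF C(2)] by auto
  have CC: "bd (C$i) (C$j) = (if i = j then 1 else 0)" for i j using ONf_bd[OF C(2)] by simp
  define \<sigma> where "\<sigma> i a b = (SOME s. (transpose (M a) ** M b) *v C$i = s *s C$i)" for i a b
  have sig: "(transpose (M a) ** M b) *v C$i = \<sigma> i a b *s C$i" for i a b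
  proof -
    have "\<exists>s. (transpose (M a) ** M b) *v C$i = s *s C$i" using Q(3) C(1) unfolding jeig_def F_def by blast
    then show ?thesis unfolding \<sigma>_def by (rule someI_ex)
  qed
  have Sv: "transpose (M a) *v (M b *v x) = (transpose (M a) ** M b) *v x" for a b x
    by (simp add: matrix_vector_mul_assoc)
  define nz where "nz i \<longleftrightarrow> (\<exists>k. M k *v C$i \<noteq> 0)" for i
  define k0 where "k0 i = (SOME k. M k *v C$i \<noteq> 0)" for i
  define \<mu> where "\<mu> i = \<sigma> i (k0 i) (k0 i)" for i
  define r where "r i = csqrt (\<mu> i)" for i
  define b where "b i = (1 / r i) *s (M (k0 i) *v C$i)" for i
  define d where "d i k = (if nz i then \<sigma> i (k0 i) k / r i else 0)" for i k
  have k0: "M (k0 i) *v C$i \<noteq> 0" if "nz i" for i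
    using that unfolding nz_def k0_def by (rule someI_ex)
  have \<mu>0: "\<mu> i \<noteq> 0" if nzi: "nz i" for i
  proof
    assume "\<mu> i = 0"
    then have "(transpose (M (k0 i)) ** M (k0 i)) *v C$i = 0" using sig[of "k0 i" "k0 i" i] unfolding \<mu>_def by simp
    then have "M (k0 i) *v C$i = 0" by (rule Mker[OF sc])
    then show False using k0[OF nzi] by simp
  qed
  have rr: "r i * r i = \<mu> i" for i unfolding r_def by (rule csqrt_sq)
  have claim2: "M k *v C$i = d i k *s b i" for k i
  proof (cases "nz i")
    case False
    then have "M k *v C$i = 0" unfolding nz_def by blast
    then show ?thesis using False unfolding d_def by simp
  next
    case True
    let ?k = "k0 i" let ?c = "C$i"
    define t where "t = \<sigma> i ?k k / \<mu> i"
    define u where "u = M k *v ?c - t *s (M ?k *v ?c)"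
    have "transpose (M ?k) *v u = \<sigma> i ?k k *s ?c - t *s (\<mu> i *s ?c)"
      unfolding u_def vec.diff vec.scale Sv sig \<mu>_def ..
    also have "\<dots> = 0" using \<mu>0[OF True] unfolding t_def by (simp add: vec_eq_iff)
    finally have tu: "transpose (M ?k) *v u = 0" .
    have "(M ?k ** transpose (M ?k)) *v u = \<mu> i *s u"
    proof -
      have "(M ?k ** transpose (M ?k)) *v (M k *v ?c) = (M ?k ** (transpose (M ?k) ** M k)) *v ?c"
        by (simp add: matrix_vector_mul_assoc matrix_mul_assoc)
      also have "\<dots> = M k *v ((transpose (M ?k) ** M ?k) *v ?c)"
        unfolding MMM[OF sc] by (simp add: matrix_vector_mul_assoc)
      also have "\<dots> = \<mu> i *s (M k *v ?c)" unfolding sig \<mu>_def vec.scale ..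
      finally have 1: "(M ?k ** transpose (M ?k)) *v (M k *v ?c) = \<mu> i *s (M k *v ?c)" .
      have "(M ?k ** transpose (M ?k)) *v (M ?k *v ?c) = (M ?k ** (transpose (M ?k) ** M ?k)) *v ?c"
        by (simp add: matrix_vector_mul_assoc matrix_mul_assoc)
      also have "\<dots> = M ?k *v ((transpose (M ?k) ** M ?k) *v ?c)" by (simp add: matrix_vector_mul_assoc)
      also have "\<dots> = \<mu> i *s (M ?k *v ?c)" unfolding sig \<mu>_def vec.scale ..
      finally have 2: "(M ?k ** transpose (M ?k)) *v (M ?k *v ?c) = \<mu> i *s (M ?k *v ?c)" .
      show ?thesis unfolding u_def vec.diff vec.scale 1 2
        by (simp add: vec.scale_right_diff_distrib vec.scale_scale mult.commute)
    qed
    moreover have "(M ?k ** transpose (M ?k)) *v u = 0"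
      using tu by (simp add: matrix_vector_mul_assoc[symmetric])
    ultimately have "\<mu> i *s u = 0" by simp
    then have "u = 0" using \<mu>0[OF True] by simp
    then have "M k *v ?c = t *s (M ?k *v ?c)" unfolding u_def by simp
    also have "\<dots> = d i k *s b i"
      unfolding d_def b_def t_def rr[of i, symmetric] using True by (simp add: vec.scale_scale)
    finally show ?thesis .
  qed
  have bdM: "bd (M a *v C$i) (M a' *v C$j) = \<sigma> j a a' * bd (C$i) (C$j)" for a a' i j
    by (simp only: bd_mv Sv sig bd_scale_right)
  have ONb: "ONf b {i. nz i}"
    unfolding ONf_def
  proof (intro ballI)
    fix i j assume i: "i \<in> {i. nz i}" and j: "j \<in> {i. nz i}"
    have "bd (b i) (b j) = (1 / r j) * ((1 / r i) * bd (M (k0 i) *v C$i) (M (k0 j) *v C$j))"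
      unfolding b_def bd_scale_left bd_scale_right ..
    also have "\<dots> = (1 / r j) * ((1 / r i) * (\<sigma> j (k0 i) (k0 j) * (if i = j then 1 else 0)))"
      unfolding bdM CC ..
    also have "\<dots> = (if i = j then 1 else 0)"
    proof (cases "i = j")
      case True
      then show ?thesis using \<mu>0[of j] j rr[of j] unfolding \<mu>_def by simp
    qed simp
    finally show "bd (b i) (b j) = (if i = j then 1 else 0)" .
  qed
  obtain B' where B': "\<forall>i\<in>{i. nz i}. B' i = b i" "ONf B' UNIV" using EXT[OF ONb] by blast
  define B where "B = ((\<chi> i. B' i) :: complex^'n^'n)"
  define W where "W = ((\<chi> i k. d i k) :: complex^'n^'n)"
  have Bi: "B$i = B' i" for i unfolding B_def by simp
  have MC: "M k *v C$i = W$i$k *s B$i" for k i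
  proof (cases "nz i")
    case True then show ?thesis using claim2 B'(1) unfolding Bi W_def by simp
  next
    case False then show ?thesis using claim2 unfolding Bi W_def d_def by simp
  qed
  have "M k $ j $ l = (\<Sum>i\<in>UNIV. W$i$k * B$i$j * C$i$l)" for k j l
  proof -
    have e: "bd (C$i) (M k $ j) = W$i$k * B$i$j" for i
      using MC[of k i] unfolding vec_eq_iff mv_comp by (simp add: bd_comm)
    have "M k $ j = (\<Sum>i\<in>UNIV. (W$i$k * B$i$j) *s C$i)"
      using corth_expand[OF Cm(2), of "M k $ j"] unfolding e .
    then show ?thesis by (simp add: vec_eq_iff)
  qed
  moreover have "ONf (\<lambda>i. B$i) UNIV" unfolding Bi using B'(2) .
  ultimately show ?thesis using C(2) by blast
qed



lemma SW: fixes f :: "'i \<Rightarrow> complex" shows "(\<Sum>l\<in>L. (\<Sum>i\<in>I. f i * g i l) * z l) = (\<Sum>i\<in>I. f i * (\<Sum>l\<in>L. g i l * z l))"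
proof -
  have "(\<Sum>l\<in>L. (\<Sum>i\<in>I. f i * g i l) * z l) = (\<Sum>l\<in>L. \<Sum>i\<in>I. f i * (g i l * z l))"
    by (simp add: sum_distrib_right mult.assoc)
  also have "\<dots> = (\<Sum>i\<in>I. \<Sum>l\<in>L. f i * (g i l * z l))" by (rule sum.swap)
  also have "\<dots> = (\<Sum>i\<in>I. f i * (\<Sum>l\<in>L. g i l * z l))" by (simp add: sum_distrib_left)
  finally show ?thesis .
qed

lemma sum4: fixes G :: complex
  shows "G * sum p A * sum q B = (\<Sum>a\<in>A. \<Sum>b\<in>B. G * p a * q b)"
  by (simp only: sum_distrib_left[of G] sum_product)

lemma YDEC:
  fixes T :: "complex^'n^'n^'n" and W B C :: "complex^'n^'n"
  assumes Tf: "\<forall>k j l. T$k$j$l = (\<Sum>i\<in>UNIV. W$i$k * B$i$j * C$i$l)"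
    and OB: "ONf (\<lambda>i. B$i) UNIV" and OC: "ONf (\<lambda>i. C$i) UNIV"
    and sc: "slice_cond (yslice T)"
  shows "\<forall>i j. i \<noteq> j \<longrightarrow> bd (W$i) (W$j) = 0" "\<forall>i. W$i \<noteq> 0 \<longrightarrow> bd (W$i) (W$i) \<noteq> 0"
proof -
  let ?Y = "yslice T"
  have CC: "bd (C$i) (C$j) = (if i = j then 1 else 0)" for i j using ONf_bd[OF OC] by simp
  have BB: "bd (B$i) (B$j) = (if i = j then 1 else 0)" for i j using ONf_bd[OF OB] by simp
  have Cm: "transpose C ** C = mat 1" using ONf_mat[OF OC] by auto
  have Ymv: "?Y a *v C$i = B$i$a *s W$i" for a i
  proof -
    have "(?Y a *v C$i)$p = W$i$p * B$i$a" for p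
    proof -
      have "(?Y a *v C$i)$p = (\<Sum>l\<in>UNIV. (\<Sum>i'\<in>UNIV. (W$i'$p * B$i'$a) * C$i'$l) * C$i$l)"
        unfolding matrix_vector_mult_def yslice_def using Tf by simp
      also have "\<dots> = (\<Sum>i'\<in>UNIV. (W$i'$p * B$i'$a) * bd (C$i') (C$i))" unfolding SW bd_def ..
      also have "\<dots> = W$i$p * B$i$a" unfolding CC by (simp add: if_distrib cong: if_cong)
      finally show ?thesis .
    qed
    then show ?thesis by (simp add: vec_eq_iff mult.commute)
  qed
  define G where "G i j = bd (W$i) (W$j)" for i j
  have K: "bd (C$i) ((transpose (?Y a) ** ?Y b) *v C$j) = B$i$a * B$j$b * G i j" for a b i j
  proof -
    have "bd (C$i) ((transpose (?Y a) ** ?Y b) *v C$j) = bd (?Y a *v C$i) (?Y b *v C$j)"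
      by (simp add: bd_mv matrix_vector_mul_assoc[symmetric])
    also have "\<dots> = B$i$a * B$j$b * G i j" unfolding Ymv G_def bd_scale_left bd_scale_right by simp
    finally show ?thesis .
  qed
  have Ksym: "B$i$a * B$j$b * G i j = B$j$a * B$i$b * G i j" for a b i j
  proof -
    let ?X = "transpose (?Y a) ** ?Y b"
    have tX: "transpose ?X = ?X" using sc_parts(4)[OF sc] by blast
    have "bd (C$i) (?X *v C$j) = bd (C$j) (transpose ?X *v C$i)" by (simp only: bd_comm[of "C$i"] bd_mv)
    then have "B$i$a * B$j$b * G i j = B$j$a * B$i$b * G j i" unfolding tX K .
    then show ?thesis unfolding G_def by (simp add: bd_comm)
  qed
  show orth: "\<forall>i j. i \<noteq> j \<longrightarrow> bd (W$i) (W$j) = 0"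
  proof (intro allI impI)
    fix i j :: 'n assume ij: "i \<noteq> j"
    have "G i j = G i j * bd (B$i) (B$i) * bd (B$j) (B$j)" using BB by simp
    also have "\<dots> = (\<Sum>a\<in>UNIV. \<Sum>b\<in>UNIV. (B$i$a * B$j$b * G i j) * (B$i$a * B$j$b))"
      unfolding bd_def sum4 by (intro sum.cong refl) (simp only: ac_simps)
    also have "\<dots> = (\<Sum>a\<in>UNIV. \<Sum>b\<in>UNIV. (B$j$a * B$i$b * G i j) * (B$i$a * B$j$b))"
      by (intro sum.cong refl) (rule arg_cong[where f="\<lambda>x. x * _"], rule Ksym)
    also have "\<dots> = G i j * bd (B$j) (B$i) * bd (B$i) (B$j)"
      unfolding bd_def sum4 by (intro sum.cong refl) (simp only: ac_simps)
    also have "\<dots> = 0" using BB ij by simp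
    finally show "bd (W$i) (W$j) = 0" unfolding G_def .
  qed
  show "\<forall>i. W$i \<noteq> 0 \<longrightarrow> bd (W$i) (W$i) \<noteq> 0"
  proof (intro allI impI notI)
    fix i0 assume W0: "W$i0 \<noteq> 0" and G0: "bd (W$i0) (W$i0) = 0"
    have "\<exists>a. B$i0$a \<noteq> 0"
    proof (rule ccontr)
      assume "\<not> ?thesis"
      then have "bd (B$i0) (B$i0) = 0" unfolding bd_def by simp
      then show False using BB[of i0 i0] by simp
    qed
    then obtain a where a: "B$i0$a \<noteq> 0" by blast
    have Gz: "bd (W$i) (W$i0) = 0" for i
      using orth G0 by (cases "i = i0") auto
    have tz: "transpose (?Y a) *v W$i0 = 0"
    proof (rule bd_nondeg)
      fix z
      have "z = (\<Sum>i\<in>UNIV. bd (C$i) z *s C$i)" by (rule corth_expand[OF Cm])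
      then have "?Y a *v z = (\<Sum>i\<in>UNIV. bd (C$i) z *s (B$i$a *s W$i))"
        by (metis (no_types, lifting) Ymv sum.cong vec.scale vec.sum)
      then have "bd (?Y a *v z) (W$i0) = 0"
        by (simp add: bd_sum_left bd_scale_left Gz)
      then have "bd z (transpose (?Y a) *v W$i0) = 0" unfolding bd_mv .
      then show "bd (transpose (?Y a) *v W$i0) z = 0" using bd_comm[of "transpose (?Y a) *v W$i0" z] by simp
    qed
    have "(transpose (?Y a) ** ?Y a) *v C$i0 = B$i0$a *s (transpose (?Y a) *v W$i0)"
      by (simp add: matrix_vector_mul_assoc[symmetric] Ymv vec.scale)
    then have "(transpose (?Y a) ** ?Y a) *v C$i0 = 0" using tz by simp
    then have "?Y a *v C$i0 = 0" by (rule KER[OF sc_parts(2)[OF sc]])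
    then show False using Ymv[of a i0] a W0 by simp
  qed
qed



lemma TRI_eq:
  fixes T :: "complex^'n^'n^'n" and A B C :: "complex^'n^'n" and al :: "complex^'n"
  assumes Tf: "\<forall>k j l. T$k$j$l = (\<Sum>i\<in>UNIV. al$i * A$i$k * B$i$j * C$i$l)"
  shows "trilin T x y z = (\<Sum>i\<in>UNIV. al$i * (A *v x)$i * (B *v y)$i * (C *v z)$i)"
proof -
  define F where "F i k j l = al$i * A$i$k * B$i$j * C$i$l * x$k * y$j * z$l" for i k j l
  have "trilin T x y z = (\<Sum>k\<in>UNIV. \<Sum>j\<in>UNIV. \<Sum>l\<in>UNIV. \<Sum>i\<in>UNIV. F i k j l)"
    unfolding trilin_def Tf[rule_format] F_def by (simp only: sum_distrib_right)
  also have "\<dots> = (\<Sum>k\<in>UNIV. \<Sum>j\<in>UNIV. \<Sum>i\<in>UNIV. \<Sum>l\<in>UNIV. F i k j l)"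
    by (rule sum.cong[OF refl], rule sum.cong[OF refl], rule sum.swap)
  also have "\<dots> = (\<Sum>k\<in>UNIV. \<Sum>i\<in>UNIV. \<Sum>j\<in>UNIV. \<Sum>l\<in>UNIV. F i k j l)"
    by (rule sum.cong[OF refl], rule sum.swap)
  also have "\<dots> = (\<Sum>i\<in>UNIV. \<Sum>k\<in>UNIV. \<Sum>j\<in>UNIV. \<Sum>l\<in>UNIV. F i k j l)"
    by (rule sum.swap)
  also have "\<dots> = (\<Sum>i\<in>UNIV. al$i * (A *v x)$i * (B *v y)$i * (C *v z)$i)"
  proof (rule sum.cong[OF refl])
    fix i
    have "al$i * (A *v x)$i * (B *v y)$i * (C *v z)$i
      = al$i * (\<Sum>k\<in>UNIV. A$i$k * x$k) * (\<Sum>j\<in>UNIV. B$i$j * y$j) * (\<Sum>l\<in>UNIV. C$i$l * z$l)"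
      unfolding matrix_vector_mult_def by simp
    also have "\<dots> = (\<Sum>l\<in>UNIV. \<Sum>j\<in>UNIV. \<Sum>k\<in>UNIV. al$i * (A$i$k * x$k) * (B$i$j * y$j) * (C$i$l * z$l))"
      by (simp only: sum_distrib_left sum_distrib_right)
    also have "\<dots> = (\<Sum>l\<in>UNIV. \<Sum>j\<in>UNIV. \<Sum>k\<in>UNIV. F i k j l)"
      unfolding F_def by (rule sum.cong[OF refl], rule sum.cong[OF refl], rule sum.cong[OF refl]) (simp only: ac_simps)
    also have "\<dots> = (\<Sum>l\<in>UNIV. \<Sum>k\<in>UNIV. \<Sum>j\<in>UNIV. F i k j l)"
      by (rule sum.cong[OF refl], rule sum.swap)
    also have "\<dots> = (\<Sum>k\<in>UNIV. \<Sum>l\<in>UNIV. \<Sum>j\<in>UNIV. F i k j l)"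
      by (rule sum.swap)
    also have "\<dots> = (\<Sum>k\<in>UNIV. \<Sum>j\<in>UNIV. \<Sum>l\<in>UNIV. F i k j l)"
      by (rule sum.cong[OF refl], rule sum.swap)
    finally show "(\<Sum>k\<in>UNIV. \<Sum>j\<in>UNIV. \<Sum>l\<in>UNIV. F i k j l) = al$i * (A *v x)$i * (B *v y)$i * (C *v z)$i" by simp
  qed
  finally show ?thesis .
qed

lemma CONV:
  fixes T :: "complex^'n^'n^'n"
  assumes scx: "slice_cond (xslice T)" and scy: "slice_cond (yslice T)"
  shows "T \<in> OT"
proof -
  obtain B C W :: "complex^'n^'n" where OB: "ONf (\<lambda>i. B$i) UNIV" and OC: "ONf (\<lambda>i. C$i) UNIV"
    and Wf: "\<forall>k j l. xslice T k $ j $ l = (\<Sum>i\<in>UNIV. W$i$k * B$i$j * C$i$l)"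
    using XDEC[OF scx] by blast
  have Tf: "\<forall>k j l. T$k$j$l = (\<Sum>i\<in>UNIV. W$i$k * B$i$j * C$i$l)" using Wf unfolding xslice_def by simp
  note Y = YDEC[OF Tf OB OC scy]
  define \<alpha> where "\<alpha> i = csqrt (bd (W$i) (W$i))" for i
  define a where "a i = (1 / \<alpha> i) *s W$i" for i
  have aa: "\<alpha> i * \<alpha> i = bd (W$i) (W$i)" for i unfolding \<alpha>_def by (rule csqrt_sq)
  have ONa: "ONf a {i. W$i \<noteq> 0}"
    unfolding ONf_def
  proof (intro ballI)
    fix i j assume i: "i \<in> {i. W$i \<noteq> 0}" and j: "j \<in> {i. W$i \<noteq> 0}"
    have "bd (a i) (a j) = (1 / \<alpha> j) * ((1 / \<alpha> i) * bd (W$i) (W$j))"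
      unfolding a_def bd_scale_left bd_scale_right ..
    also have "\<dots> = (if i = j then 1 else 0)"
    proof (cases "i = j")
      case True
      have "bd (W$j) (W$j) \<noteq> 0" using Y(2) j by blast
      then show ?thesis using True aa[of j] by simp
    next
      case False then show ?thesis using Y(1) by simp
    qed
    finally show "bd (a i) (a j) = (if i = j then 1 else 0)" .
  qed
  obtain A' where A': "\<forall>i\<in>{i. W$i \<noteq> 0}. A' i = a i" "ONf A' UNIV" using EXT[OF ONa] by blast
  define A where "A = ((\<chi> i. A' i) :: complex^'n^'n)"
  define al where "al = ((\<chi> i. if W$i \<noteq> 0 then \<alpha> i else 0) :: complex^'n)"
  have Ai: "A$i = A' i" for i unfolding A_def by simp
  have OA: "ONf (\<lambda>i. A$i) UNIV" unfolding Ai using A'(2) .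
  have Wa: "W$i$k = al$i * A$i$k" for i k
  proof (cases "W$i = 0")
    case True then show ?thesis unfolding al_def by simp
  next
    case False
    have "bd (W$i) (W$i) \<noteq> 0" using Y(2) False by blast
    then have a0: "\<alpha> i \<noteq> 0" using aa[of i] by auto
    have "A$i = a i" unfolding Ai using A'(1) False by simp
    then show ?thesis unfolding al_def a_def using False a0 by simp
  qed
  have Tf2: "\<forall>k j l. T$k$j$l = (\<Sum>i\<in>UNIV. al$i * A$i$k * B$i$j * C$i$l)"
    using Tf unfolding Wa by simp
  have "corth A" "corth B" "corth C" unfolding corth_def using ONf_mat OA OB OC by blast+
  then show ?thesis unfolding OT_def using TRI_eq[OF Tf2] by blast
qed



lemma LSUM:
  fixes Q :: "complex^'n^'n"
  assumes Q: "Q ** transpose Q = mat 1"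
  shows "(\<Sum>j\<in>UNIV. (\<Sum>m\<in>UNIV. a m * Q$m$j) * (\<Sum>m\<in>UNIV. b m * Q$m$j)) = (\<Sum>m\<in>UNIV. a m * b m)"
proof -
  have QQ: "(\<Sum>j\<in>UNIV. Q$m$j * Q$m'$j) = (if m = m' then 1 else 0)" for m m'
    using corth_cols[OF Q, of m m'] unfolding bd_def .
  have "(\<Sum>j\<in>UNIV. (\<Sum>m\<in>UNIV. a m * Q$m$j) * (\<Sum>m\<in>UNIV. b m * Q$m$j))
      = (\<Sum>j\<in>UNIV. \<Sum>m\<in>UNIV. \<Sum>m'\<in>UNIV. (a m * Q$m$j) * (b m' * Q$m'$j))"
    by (simp only: sum_product)
  also have "\<dots> = (\<Sum>m\<in>UNIV. \<Sum>j\<in>UNIV. \<Sum>m'\<in>UNIV. (a m * Q$m$j) * (b m' * Q$m'$j))"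
    by (rule sum.swap)
  also have "\<dots> = (\<Sum>m\<in>UNIV. \<Sum>m'\<in>UNIV. \<Sum>j\<in>UNIV. (a m * Q$m$j) * (b m' * Q$m'$j))"
    by (rule sum.cong[OF refl], rule sum.swap)
  also have "\<dots> = (\<Sum>m\<in>UNIV. \<Sum>m'\<in>UNIV. (a m * b m') * (\<Sum>j\<in>UNIV. Q$m$j * Q$m'$j))"
    unfolding sum_distrib_left by (rule sum.cong[OF refl], rule sum.cong[OF refl], rule sum.cong[OF refl]) (simp only: ac_simps)
  also have "\<dots> = (\<Sum>m\<in>UNIV. a m * b m)" unfolding QQ by (simp add: if_distrib cong: if_cong)
  finally show ?thesis .
qed

lemma inv_unique: assumes "P ** X = mat 1" "X ** P = mat 1"
  shows "matrix_inv (P :: complex^'n^'n) = X"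
proof -
  have inv: "invertible P" unfolding invertible_def using assms by blast
  have "matrix_inv P = matrix_inv P ** (P ** X)" using assms by simp
  also have "\<dots> = (matrix_inv P ** P) ** X" by (simp add: matrix_mul_assoc)
  also have "\<dots> = X" using matrix_inv_props[OF inv] by simp
  finally show ?thesis .
qed

lemma delta1: fixes m :: "'n::finite" shows "(\<Sum>m'\<in>UNIV. (if m' = m then 1 else 0) * f m') = (f m :: complex)"
proof -
  have "(\<Sum>m'\<in>UNIV. (if m' = m then 1 else 0) * f m') = (\<Sum>m'\<in>UNIV. if m' = m then f m' else 0)"
    by (rule sum.cong) auto
  also have "\<dots> = f m" by (subst sum.delta) simp_all
  finally show ?thesis .
qed

lemma ROWSPAN:
  fixes N P :: "complex^'n^'n" and V :: "'n \<Rightarrow> complex^'n"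
  assumes rowsN: "\<And>j. N$j = (\<Sum>m\<in>UNIV. (g m * P$m$j) *s V m)" and P: "P ** transpose P = mat 1"
  shows "vec.span (rows N) = vec.span {V m | m. g m \<noteq> 0}"
proof -
  have rN: "rows N = {N$j | j. True}" unfolding rows_def row_eq by simp
  have 1: "rows N \<subseteq> vec.span {V m | m. g m \<noteq> 0}"
  proof
    fix x assume "x \<in> rows N"
    then obtain j where x: "x = N$j" unfolding rN by blast
    have "(g m * P$m$j) *s V m \<in> vec.span {V m | m. g m \<noteq> 0}" for m
    proof (cases "g m = 0")
      case True then show ?thesis by (simp add: vec.span_zero)
    next
      case False
      then have "V m \<in> {V m | m. g m \<noteq> 0}" by blast
      then show ?thesis by (intro vec.span_scale vec.span_base)
    qed
    then show "x \<in> vec.span {V m | m. g m \<noteq> 0}" unfolding x rowsN by (intro vec.span_sum)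
  qed
  have 2: "{V m | m. g m \<noteq> 0} \<subseteq> vec.span (rows N)"
  proof
    fix x assume "x \<in> {V m | m. g m \<noteq> 0}"
    then obtain m where x: "x = V m" and g: "g m \<noteq> 0" by blast
    have "(\<Sum>j\<in>UNIV. P$m$j *s N$j) = g m *s V m"
    proof -
      have "(\<Sum>j\<in>UNIV. P$m$j *s N$j)$q = g m * V m $ q" for q
      proof -
        have "(\<Sum>j\<in>UNIV. P$m$j *s N$j)$q = (\<Sum>j\<in>UNIV. P$m$j * (\<Sum>m'\<in>UNIV. (g m' * V m' $ q) * P$m'$j))"
          unfolding rowsN by (simp add: ac_simps)
        also have "\<dots> = (\<Sum>j\<in>UNIV. (\<Sum>m'\<in>UNIV. (if m' = m then 1 else 0) * P$m'$j) * (\<Sum>m'\<in>UNIV. (g m' * V m' $ q) * P$m'$j))"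
          unfolding delta1 ..
        also have "\<dots> = (\<Sum>m'\<in>UNIV. (if m' = m then 1 else 0) * (g m' * V m' $ q))" by (rule LSUM[OF P])
        also have "\<dots> = g m * V m $ q" by (rule delta1)
        finally show ?thesis .
      qed
      then show ?thesis by (simp add: vec_eq_iff)
    qed
    then have "V m = (1 / g m) *s (\<Sum>j\<in>UNIV. P$m$j *s N$j)" using g by (simp add: vec.scale_scale)
    also have "\<dots> \<in> vec.span (rows N)"
      by (intro vec.span_scale vec.span_sum vec.span_base) (auto simp: rN)
    finally show "x \<in> vec.span (rows N)" unfolding x .
  qed
  show ?thesis unfolding vec.span_eq using 1 2 by blast
qed



lemma tr_comp: "(transpose X)$p$q = X$q$p"
  by (simp add: transpose_def)

lemma symm_by_comp: assumes "\<And>p q. X$q$p = X$p$q" shows "transpose X = X"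
  unfolding vec_eq_iff tr_comp using assms by simp

lemma FWD:
  fixes N :: "'n \<Rightarrow> complex^'n^'n" and Q R :: "complex^'n^'n" and e :: "'n \<Rightarrow> 'n \<Rightarrow> complex"
  assumes Nf: "\<And>k j l. N k $ j $ l = (\<Sum>m\<in>UNIV. e k m * Q$m$j * R$m$l)"
    and Q: "Q ** transpose Q = mat 1" and R: "R ** transpose R = mat 1"
  shows "slice_cond N"
proof -
  have R2: "transpose R ** R = mat 1" using R matrix_left_right_inverse by blast
  have RR: "bd (R$i) (R$j) = (if i = j then 1 else 0)" for i j by (rule corth_cols[OF R])
  have Sf: "(transpose (N a) ** N b)$p$q = (\<Sum>m\<in>UNIV. (e a m * R$m$p) * (e b m * R$m$q))" for a b p q
  proof -
    have "(transpose (N a) ** N b)$p$q = (\<Sum>j\<in>UNIV. (\<Sum>m\<in>UNIV. (e a m * R$m$p) * Q$m$j) * (\<Sum>m\<in>UNIV. (e b m * R$m$q) * Q$m$j))"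
      unfolding matrix_matrix_mult_def tr_comp by (simp add: Nf ac_simps)
    also have "\<dots> = (\<Sum>m\<in>UNIV. (e a m * R$m$p) * (e b m * R$m$q))" by (rule LSUM[OF Q])
    finally show ?thesis .
  qed
  have Rf: "(N a ** transpose (N b))$p$q = (\<Sum>m\<in>UNIV. (e a m * Q$m$p) * (e b m * Q$m$q))" for a b p q
  proof -
    have "(N a ** transpose (N b))$p$q = (\<Sum>l\<in>UNIV. (\<Sum>m\<in>UNIV. (e a m * Q$m$p) * R$m$l) * (\<Sum>m\<in>UNIV. (e b m * Q$m$q) * R$m$l))"
      unfolding matrix_matrix_mult_def tr_comp by (simp add: Nf ac_simps)
    also have "\<dots> = (\<Sum>m\<in>UNIV. (e a m * Q$m$p) * (e b m * Q$m$q))" by (rule LSUM[OF R])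
    finally show ?thesis .
  qed
  have symS: "transpose (transpose (N a) ** N b) = transpose (N a) ** N b" for a b
    by (rule symm_by_comp) (simp only: Sf ac_simps)
  have symR: "transpose (N a ** transpose (N b)) = N a ** transpose (N b)" for a b
    by (rule symm_by_comp) (simp only: Rf ac_simps)
  have diag: "diagonalizable (transpose (N k) ** N k)" for k
  proof -
    let ?S = "transpose (N k) ** N k"
    have Sv: "?S *v v = (\<Sum>m\<in>UNIV. (e k m * e k m * bd (R$m) v) *s R$m)" for v
    proof -
      have "(?S *v v)$p = (\<Sum>m\<in>UNIV. (e k m * e k m * bd (R$m) v) *s R$m)$p" for p
      proof -
        have "(?S *v v)$p = (\<Sum>q\<in>UNIV. (\<Sum>m\<in>UNIV. (e k m * e k m * R$m$p) * R$m$q) * v$q)"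
          unfolding matrix_vector_mult_def by (simp add: Sf ac_simps)
        also have "\<dots> = (\<Sum>m\<in>UNIV. (e k m * e k m * R$m$p) * bd (R$m) v)" unfolding SW bd_def ..
        also have "\<dots> = (\<Sum>m\<in>UNIV. (e k m * e k m * bd (R$m) v) *s R$m)$p" by (simp add: ac_simps)
        finally show ?thesis .
      qed
      then show ?thesis by (simp add: vec_eq_iff)
    qed
    have SR: "?S *v R$i = (e k i * e k i) *s R$i" for i
    proof -
      have "?S *v R$i = (\<Sum>m\<in>UNIV. if m = i then (e k m * e k m) *s R$m else 0)"
        unfolding Sv RR by (rule sum.cong) auto
      also have "\<dots> = (e k i * e k i) *s R$i" by (subst sum.delta) simp_all
      finally show ?thesis .
    qed
    have RS: "bd ((R ** ?S)$i) x = bd (R$i) (?S *v x)" for i x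
    proof -
      have "bd ((R ** ?S)$i) x = ((R ** ?S) *v x)$i" by (simp add: mv_comp)
      also have "\<dots> = (R *v (?S *v x))$i" by (simp add: matrix_vector_mul_assoc)
      also have "\<dots> = bd (R$i) (?S *v x)" by (simp add: mv_comp)
      finally show ?thesis .
    qed
    have inv: "invertible (transpose R)" unfolding invertible_def using R R2 by auto
    have mi: "matrix_inv (transpose R) = R" by (rule inv_unique[OF R2 R])
    have "is_diag_mat (matrix_inv (transpose R) ** ?S ** transpose R)"
      unfolding is_diag_mat_def mi
    proof (intro allI impI)
      fix i j :: 'n assume ij: "i \<noteq> j"
      have "(R ** ?S ** transpose R)$i$j = bd ((R ** ?S)$i) (R$j)" by (rule mm_bd)
      also have "\<dots> = 0" unfolding RS SR bd_scale_right RR using ij by simp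
      finally show "(R ** ?S ** transpose R)$i$j = 0" .
    qed
    then show ?thesis unfolding diagonalizable_def using inv by blast
  qed
  have rk: "rank (N k) = rank (transpose (N k) ** N k)" for k
  proof -
    let ?S = "transpose (N k) ** N k"
    have r1: "N k $ j = (\<Sum>m\<in>UNIV. (e k m * Q$m$j) *s R$m)" for j
      by (simp add: vec_eq_iff Nf ac_simps)
    have r2: "?S $ p = (\<Sum>m\<in>UNIV. ((e k m * e k m) * R$m$p) *s R$m)" for p
      by (simp add: vec_eq_iff Sf ac_simps)
    have s1: "vec.span (rows (N k)) = vec.span {R$m | m. e k m \<noteq> 0}" by (rule ROWSPAN[OF r1 Q])
    have s2: "vec.span (rows ?S) = vec.span {R$m | m. e k m * e k m \<noteq> 0}" by (rule ROWSPAN[OF r2 R])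
    have "vec.span (rows (N k)) = vec.span (rows ?S)" unfolding s1 s2 by simp
    then show ?thesis unfolding row_rank_def_gen by (metis vec.dim_span)
  qed
  show ?thesis unfolding slice_cond_def using diag rk symS symR by blast
qed

lemma trilin_axis: "trilin T (axis k 1) (axis j 1) (axis l 1) = T$k$j$l"
proof -
  have h: "\<And>(x::complex) P. x * (if P then 1 else 0) = (if P then x else 0)" by simp
  show ?thesis unfolding trilin_def axis_def by (simp add: h)
qed

theorem theorem39:
  fixes T :: "complex^'n^'n^'n"
  shows "T \<in> OT \<longleftrightarrow> slice_cond (xslice T) \<and> slice_cond (yslice T) \<and> slice_cond (zslice T)"
proof
  assume "T \<in> OT"
  then obtain A B C :: "complex^'n^'n" and al :: "complex^'n" where
    cA: "corth A" and cB: "corth B" and cC: "corth C" and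
    H: "\<forall>x y z. trilin T x y z = (\<Sum>i\<in>UNIV. al$i * (A *v x)$i * (B *v y)$i * (C *v z)$i)"
    unfolding OT_def by blast
  have A: "A ** transpose A = mat 1" using cA unfolding corth_def using matrix_left_right_inverse by blast
  have B: "B ** transpose B = mat 1" using cB unfolding corth_def using matrix_left_right_inverse by blast
  have C: "C ** transpose C = mat 1" using cC unfolding corth_def using matrix_left_right_inverse by blast
  have Tf: "T$k$j$l = (\<Sum>m\<in>UNIV. al$m * A$m$k * B$m$j * C$m$l)" for k j l
    using H trilin_axis[of T k j l] by (simp add: mv_axis)
  have "slice_cond (xslice T)"
    by (rule FWD[where e="\<lambda>k m. al$m * A$m$k", OF _ B C]) (simp add: xslice_def Tf)
  moreover have "slice_cond (yslice T)"
    by (rule FWD[where e="\<lambda>k m. al$m * B$m$k", OF _ A C]) (simp add: yslice_def Tf ac_simps)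
  moreover have "slice_cond (zslice T)"
    by (rule FWD[where e="\<lambda>k m. al$m * C$m$k", OF _ A B]) (simp add: zslice_def Tf ac_simps)
  ultimately show "slice_cond (xslice T) \<and> slice_cond (yslice T) \<and> slice_cond (zslice T)" by blast
next
  assume "slice_cond (xslice T) \<and> slice_cond (yslice T) \<and> slice_cond (zslice T)"
  then show "T \<in> OT" using CONV by blast
qed


end
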